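(* Let $L>0$ be fixed. For every $k\in(0,1)$, the function $\varphi_k$ defined below is an even, smooth, $L$-periodic solution of $-\varphi''+\omega\varphi-\varphi^{5}=0$ with $\omega=\omega(k)$. The parameters satisfy $a(k)\in\left(\tfrac{2\sqrt{\pi}}{\sqrt{L}},+\infty\right)$ and $q(k)\in(-2,-1)$, and they depend smoothly on $k\in(0,1)$. The map $k\mapsto\omega(k)$ is a smooth, strictly increasing bijection of $(0,1)$ onto $\mathcal{I}:=\left(\tfrac{4\pi^2}{L^2},+\infty\right)$. Consequently, $\omega\in\mathcal{I}\mapsto\varphi_\omega\in H^2_{per,e}([0,L])$ is a smooth curve of periodic solutions.
   Context: For $k\in(0,1)$, let ${\rm K}(k)$ denote the complete elliptic integral of the first kind, and let ${\rm sn},{\rm cn}$ be the Jacobi elliptic functions. Set $s(k)=\sqrt{k^4-k^2+1}$ and $$q(k)=k^2-1-s(k),\qquad b(k)=\frac{4{\rm K}(k)}{L},$$ $$a(k)=\frac{2\big({\rm K}(k)^2(k^2-1-s(k))(-k^2-1-s(k))L^2\big)^{1/4}}{L},$$ $$\omega(k)=\frac{-16\,{\rm K}(k)^2\big((1-k^2)s(k)+k^4-k^2+1\big)}{(k^2-1-s(k))L^2}.$$ Define $$\varphi_k(x)=\frac{a(k)\,{\rm cn}(b(k)x,k)}{\sqrt{1-q(k)\,{\rm sn}^2(b(k)x,k)}},$$ and $\varphi_\omega:=\varphi_{k}$ with $\omega(k)=\omega$. $H^2_{per,e}$ is the subspace of even functions in $H^2_{per}([0,L])$. *)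

theory Defs
  imports "HOL-Analysis.Analysis"
begin

definition ellF :: "real \<Rightarrow> real \<Rightarrow> real" where
  "ellF \<phi> k = (if 0 \<le> \<phi>
      then integral {0..\<phi>} (\<lambda>\<theta>. 1 / sqrt (1 - k\<^sup>2 * (sin \<theta>)\<^sup>2))
      else - integral {\<phi>..0} (\<lambda>\<theta>. 1 / sqrt (1 - k\<^sup>2 * (sin \<theta>)\<^sup>2)))"

definition ellK :: "real \<Rightarrow> real" where
  "ellK k = integral {0..pi/2} (\<lambda>\<theta>. 1 / sqrt (1 - k\<^sup>2 * (sin \<theta>)\<^sup>2))"

definition jam :: "real \<Rightarrow> real \<Rightarrow> real" where
  "jam u k = (THE \<phi>. ellF \<phi> k = u)"

definition jsn :: "real \<Rightarrow> real \<Rightarrow> real" where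
  "jsn u k = sin (jam u k)"

definition jcn :: "real \<Rightarrow> real \<Rightarrow> real" where
  "jcn u k = cos (jam u k)"

definition s_par :: "real \<Rightarrow> real" where
  "s_par k = sqrt (k^4 - k\<^sup>2 + 1)"

definition q_par :: "real \<Rightarrow> real" where
  "q_par k = k\<^sup>2 - 1 - s_par k"

definition b_par :: "real \<Rightarrow> real \<Rightarrow> real" where
  "b_par L k = 4 * ellK k / L"

definition a_par :: "real \<Rightarrow> real \<Rightarrow> real" where
  "a_par L k = 2 * root 4 ((ellK k)\<^sup>2 * (k\<^sup>2 - 1 - s_par k) * (- k\<^sup>2 - 1 - s_par k) * L\<^sup>2) / L"

definition omega_par :: "real \<Rightarrow> real \<Rightarrow> real" where
  "omega_par L k = - 16 * (ellK k)\<^sup>2 * ((1 - k\<^sup>2) * s_par k + k^4 - k\<^sup>2 + 1)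
                    / ((k\<^sup>2 - 1 - s_par k) * L\<^sup>2)"

definition phi_k :: "real \<Rightarrow> real \<Rightarrow> real \<Rightarrow> real" where
  "phi_k L k x = a_par L k * jcn (b_par L k * x) k
                 / sqrt (1 - q_par k * (jsn (b_par L k * x) k)\<^sup>2)"

definition k_of_omega :: "real \<Rightarrow> real \<Rightarrow> real" where
  "k_of_omega L w = (THE k. k \<in> {0<..<1} \<and> omega_par L k = w)"

definition phi_omega :: "real \<Rightarrow> real \<Rightarrow> real \<Rightarrow> real" where
  "phi_omega L w x = phi_k L (k_of_omega L w) x"

text \<open>C^n on a set S (intended for open S): f is n times differentiable with
  continuous n-th derivatives; derivatives expressed via all directional derivatives.\<close>
fun Cn_on :: "nat \<Rightarrow> 'a::real_normed_vector set \<Rightarrow> ('a \<Rightarrow> 'b::real_normed_vector) \<Rightarrow> bool" where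
  "Cn_on 0 S f = continuous_on S f"
| "Cn_on (Suc n) S f = (\<exists>D. (\<forall>x\<in>S. (f has_derivative D x) (at x)) \<and>
                          (\<forall>v. Cn_on n S (\<lambda>x. D x v)))"

definition smooth_on :: "'a::real_normed_vector set \<Rightarrow> ('a \<Rightarrow> 'b::real_normed_vector) \<Rightarrow> bool" where
  "smooth_on S f = (\<forall>n. Cn_on n S f)"

end

theory Submission
  imports Defs
begin


lemma Cn_on_SucI:
  "(\<And>x. x \<in> S \<Longrightarrow> (f has_derivative D x) (at x)) \<Longrightarrow> (\<And>v. Cn_on n S (\<lambda>x. D x v)) \<Longrightarrow> Cn_on (Suc n) S f"
  by (simp only: Cn_on.simps) blast

lemma Cn_on_SucE:
  assumes "Cn_on (Suc n) S f"
  obtains D where "\<And>x. x \<in> S \<Longrightarrow> (f has_derivative D x) (at x)" "\<And>v. Cn_on n S (\<lambda>x. D x v)"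
  using assms by (simp only: Cn_on.simps) blast

declare Cn_on.simps(2)[simp del]

lemma Cn_on_cont: "Cn_on n S f \<Longrightarrow> continuous_on S f"
proof (cases n)
  case 0 then show "Cn_on n S f \<Longrightarrow> continuous_on S f" by simp
next
  case (Suc m)
  assume "Cn_on n S f"
  then obtain D where "\<And>x. x \<in> S \<Longrightarrow> (f has_derivative D x) (at x)" using Suc Cn_on_SucE by metis
  then show ?thesis
    by (meson continuous_at_imp_continuous_on has_derivative_continuous)
qed

lemma Cn_on_Suc_mono: "Cn_on (Suc n) S f \<Longrightarrow> Cn_on n S f"
proof (induction n arbitrary: f)
  case 0 then show ?case using Cn_on_cont by simp
next
  case (Suc n)
  obtain D where D: "\<And>x. x \<in> S \<Longrightarrow> (f has_derivative D x) (at x)"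
    "\<And>v. Cn_on (Suc n) S (\<lambda>x. D x v)" by (rule Cn_on_SucE[OF Suc.prems]) blast
  show ?case by (rule Cn_on_SucI[OF D(1) Suc.IH[OF D(2)]])
qed

lemma Cn_on_le: "m \<le> n \<Longrightarrow> Cn_on n S f \<Longrightarrow> Cn_on m S f"
proof (induction n)
  case 0 then show ?case by simp
next
  case (Suc n)
  show ?case
  proof (cases "m = Suc n")
    case True then show ?thesis using Suc by simp
  next
    case False then have "m \<le> n" using Suc.prems by simp
    then show ?thesis using Suc.IH Suc.prems Cn_on_Suc_mono by blast
  qed
qed

lemma Cn_on_subset: "Cn_on n S f \<Longrightarrow> T \<subseteq> S \<Longrightarrow> Cn_on n T f"
proof (induction n arbitrary: f)
  case 0 then show ?case using continuous_on_subset by auto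
next
  case (Suc n)
  obtain D where D: "\<And>x. x \<in> S \<Longrightarrow> (f has_derivative D x) (at x)"
    "\<And>v. Cn_on n S (\<lambda>x. D x v)" by (rule Cn_on_SucE[OF Suc.prems(1)]) blast
  show ?case by (rule Cn_on_SucI[of T f D]) (use D Suc in auto)
qed

lemma Cn_on_cong:
  assumes "open S" "\<And>x. x \<in> S \<Longrightarrow> f x = g x" "Cn_on n S f"
  shows "Cn_on n S g"
  using assms(2,3)
proof (induction n arbitrary: f g)
  case 0 then show ?case using continuous_on_cong by auto
next
  case (Suc n)
  obtain D where D: "\<And>x. x \<in> S \<Longrightarrow> (f has_derivative D x) (at x)"
    "\<And>v. Cn_on n S (\<lambda>x. D x v)" by (rule Cn_on_SucE[OF Suc.prems(2)]) blast
  have "(g has_derivative D x) (at x)" if "x \<in> S" for x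
    using D(1)[OF that] Suc.prems(1) assms(1) that
    by (metis has_derivative_transform_within_open)
  then show ?case using D(2) by (rule Cn_on_SucI)
qed

lemma Cn_on_const: "Cn_on n S (\<lambda>x. c)"
proof (induction n arbitrary: c)
  case 0 then show ?case by simp
next
  case (Suc n)
  show ?case by (rule Cn_on_SucI[where D="\<lambda>x v. 0"]) (auto intro: derivative_eq_intros Suc)
qed

lemma Cn_on_linear: "bounded_linear L \<Longrightarrow> Cn_on n S L"
proof (cases n)
  case 0 assume "bounded_linear L" then show ?thesis using 0
    by (simp add: linear_continuous_on)
next
  case (Suc m) assume L: "bounded_linear L"
  show ?thesis unfolding Suc
    by (rule Cn_on_SucI[where D="\<lambda>x. L"]) (auto intro: L bounded_linear_imp_has_derivative Cn_on_const)
qed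

lemma Cn_on_id: "Cn_on n S (\<lambda>x. x)"
  using Cn_on_linear[OF bounded_linear_ident, of n S] by simp


lemma Cn_on_add:
  "Cn_on n S f \<Longrightarrow> Cn_on n S g \<Longrightarrow> Cn_on n S (\<lambda>x. f x + g x)"
proof (induction n arbitrary: f g)
  case 0 then show ?case by (simp add: continuous_on_add)
next
  case (Suc n)
  obtain D where D: "\<And>x. x \<in> S \<Longrightarrow> (f has_derivative D x) (at x)"
    "\<And>v. Cn_on n S (\<lambda>x. D x v)" by (rule Cn_on_SucE[OF Suc.prems(1)]) blast
  obtain E where E: "\<And>x. x \<in> S \<Longrightarrow> (g has_derivative E x) (at x)"
    "\<And>v. Cn_on n S (\<lambda>x. E x v)" by (rule Cn_on_SucE[OF Suc.prems(2)]) blast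
  show ?case
  proof (rule Cn_on_SucI[where D="\<lambda>x v. D x v + E x v"])
    show "((\<lambda>x. f x + g x) has_derivative (\<lambda>v. D x v + E x v)) (at x)" if "x \<in> S" for x
      using D(1)[OF that] E(1)[OF that] by (rule has_derivative_add)
    show "Cn_on n S (\<lambda>x. D x v + E x v)" for v by (rule Suc.IH[OF D(2) E(2)])
  qed
qed

lemma Cn_on_blinear_comp:
  assumes "bounded_linear L" "Cn_on n S f"
  shows "Cn_on n S (\<lambda>x. L (f x))"
  using assms(2)
proof (induction n arbitrary: f)
  case 0
  from 0 have cf: "continuous_on S f" by simp
  have "continuous_on (f ` S) L" by (rule linear_continuous_on[OF assms(1)])
  from continuous_on_compose[OF cf this] show ?case by (simp add: o_def)
next
  case (Suc n)
  obtain D where D: "\<And>x. x \<in> S \<Longrightarrow> (f has_derivative D x) (at x)"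
    "\<And>v. Cn_on n S (\<lambda>x. D x v)" by (rule Cn_on_SucE[OF Suc.prems(1)]) blast
  show ?case
  proof (rule Cn_on_SucI[where D="\<lambda>x v. L (D x v)"])
    show "((\<lambda>x. L (f x)) has_derivative (\<lambda>v. L (D x v))) (at x)" if "x \<in> S" for x
      using bounded_linear.has_derivative[OF assms(1) D(1)[OF that]] .
    show "Cn_on n S (\<lambda>x. L (D x v))" for v by (rule Suc.IH[OF D(2)])
  qed
qed

lemma Cn_on_uminus: assumes "Cn_on n S f" shows "Cn_on n S (\<lambda>x. - f x)"
  using Cn_on_blinear_comp[OF bounded_linear_minus[OF bounded_linear_ident] assms] by simp

lemma Cn_on_diff:
  assumes "Cn_on n S f" "Cn_on n S g" shows "Cn_on n S (\<lambda>x. f x - g x)"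
  using Cn_on_add[OF assms(1) Cn_on_uminus[OF assms(2)]] by simp

lemma Cn_on_mult:
  fixes f g :: "'a::real_normed_vector \<Rightarrow> real"
  shows "Cn_on n S f \<Longrightarrow> Cn_on n S g \<Longrightarrow> Cn_on n S (\<lambda>x. f x * g x)"
proof (induction n arbitrary: f g)
  case 0 then show ?case by (simp add: continuous_on_mult)
next
  case (Suc n)
  obtain D where D: "\<And>x. x \<in> S \<Longrightarrow> (f has_derivative D x) (at x)"
    "\<And>v. Cn_on n S (\<lambda>x. D x v)" by (rule Cn_on_SucE[OF Suc.prems(1)]) blast
  obtain E where E: "\<And>x. x \<in> S \<Longrightarrow> (g has_derivative E x) (at x)"
    "\<And>v. Cn_on n S (\<lambda>x. E x v)" by (rule Cn_on_SucE[OF Suc.prems(2)]) blast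
  have f: "Cn_on n S f" and g: "Cn_on n S g" using Suc.prems Cn_on_Suc_mono by blast+
  show ?case
  proof (rule Cn_on_SucI[where D="\<lambda>x v. f x * E x v + D x v * g x"])
    show "((\<lambda>x. f x * g x) has_derivative (\<lambda>v. f x * E x v + D x v * g x)) (at x)" if "x \<in> S" for x
      using D(1)[OF that] E(1)[OF that] by (auto intro: derivative_eq_intros)
    show "Cn_on n S (\<lambda>x. f x * E x v + D x v * g x)" for v
      by (rule Cn_on_add[OF Suc.IH[OF f E(2)] Suc.IH[OF D(2) g]])
  qed
qed

lemma Cn_on_sum:
  fixes f :: "'i \<Rightarrow> 'a::real_normed_vector \<Rightarrow> 'b::real_normed_vector"
  shows "finite I \<Longrightarrow> (\<And>i. i \<in> I \<Longrightarrow> Cn_on n S (f i)) \<Longrightarrow> Cn_on n S (\<lambda>x. \<Sum>i\<in>I. f i x)"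
proof (induction I rule: finite_induct)
  case empty then show ?case by (simp add: Cn_on_const)
next
  case (insert i I)
  have "Cn_on n S (\<lambda>x. f i x + (\<Sum>i\<in>I. f i x))"
    using insert by (intro Cn_on_add) auto
  then show ?case using insert(1,2) by simp
qed

lemma Cn_on_compose:
  fixes f :: "'b::euclidean_space \<Rightarrow> real" and g :: "'a::real_normed_vector \<Rightarrow> 'b"
  assumes "open S" "Cn_on n T f" "Cn_on n S g" "g ` S \<subseteq> T"
  shows "Cn_on n S (\<lambda>x. f (g x))"
  using assms(2-)
proof (induction n arbitrary: f g)
  case 0 then show ?case using continuous_on_compose2 by auto
next
  case (Suc n)
  obtain D where D: "\<And>y. y \<in> T \<Longrightarrow> (f has_derivative D y) (at y)"
    "\<And>v. Cn_on n T (\<lambda>y. D y v)" by (rule Cn_on_SucE[OF Suc.prems(1)]) blast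
  obtain E where E: "\<And>x. x \<in> S \<Longrightarrow> (g has_derivative E x) (at x)"
    "\<And>v. Cn_on n S (\<lambda>x. E x v)" by (rule Cn_on_SucE[OF Suc.prems(2)]) blast
  show ?case
  proof (rule Cn_on_SucI[where D="\<lambda>x v. D (g x) (E x v)"])
    fix x assume x: "x \<in> S"
    then have "g x \<in> T" using Suc.prems(3) by auto
    then show "((\<lambda>x. f (g x)) has_derivative (\<lambda>v. D (g x) (E x v))) (at x)"
      using diff_chain_at[OF E(1)[OF x] D(1)[OF \<open>g x \<in> T\<close>]]
      by (simp add: o_def)
  next
    fix v
    have eq: "(\<Sum>i\<in>Basis. (E x v \<bullet> i) * D (g x) i) = D (g x) (E x v)" if "x \<in> S" for x
    proof -
      have "g x \<in> T" using that Suc.prems(3) by auto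
      then have lin: "linear (D (g x))" using D(1) has_derivative_linear by blast
      have "D (g x) (E x v) = D (g x) (\<Sum>i\<in>Basis. (E x v \<bullet> i) *\<^sub>R i)"
        by (simp add: euclidean_representation)
      also have "\<dots> = (\<Sum>i\<in>Basis. (E x v \<bullet> i) * D (g x) i)"
        using lin by (simp add: linear_sum linear_scale)
      finally show ?thesis by simp
    qed
    have hsum: "Cn_on n S (\<lambda>x. \<Sum>i\<in>Basis. (E x v \<bullet> i) * D (g x) i)"
    proof (rule Cn_on_sum)
      fix i :: 'b assume "i \<in> Basis"
      have "Cn_on n S (\<lambda>x. E x v \<bullet> i)"
        using Cn_on_blinear_comp[OF bounded_linear_inner_left E(2)] by blast
      moreover have "Cn_on n S (\<lambda>x. D (g x) i)"
        using Suc.IH[OF D(2) Cn_on_Suc_mono[OF Suc.prems(2)] Suc.prems(3)] .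
      ultimately show "Cn_on n S (\<lambda>x. (E x v \<bullet> i) * D (g x) i)" by (rule Cn_on_mult)
    qed simp
    show "Cn_on n S (\<lambda>x. D (g x) (E x v))"
      by (rule Cn_on_cong[OF assms(1) _ hsum]) (simp add: eq)
  qed
qed


lemma Cn_on_SucI_real:
  fixes f :: "real \<Rightarrow> real"
  assumes "\<And>x. x \<in> S \<Longrightarrow> (f has_real_derivative f' x) (at x)" "Cn_on n S f'"
  shows "Cn_on (Suc n) S f"
proof (rule Cn_on_SucI[where D="\<lambda>x v. v * f' x"])
  show "(f has_derivative (\<lambda>v. v * f' x)) (at x)" if "x \<in> S" for x
  proof -
    have "(\<lambda>v. v * f' x) = (*) (f' x)" by (auto simp: fun_eq_iff)
    then show ?thesis using assms(1)[OF that] by (simp add: has_field_derivative_def)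
  qed
  show "Cn_on n S (\<lambda>x. v * f' x)" for v by (rule Cn_on_mult[OF Cn_on_const assms(2)])
qed

lemma Cn_on_mult_const: "Cn_on n S f \<Longrightarrow> Cn_on n S (\<lambda>x. c * (f x::real))"
  by (rule Cn_on_mult[OF Cn_on_const])

lemma Cn_inverse: "Cn_on n (-{0}) (inverse :: real \<Rightarrow> real)"
proof (induction n)
  case 0 then show ?case by (simp add: continuous_on_inverse continuous_on_id)
next
  case (Suc n)
  show ?case
  proof (rule Cn_on_SucI_real[where f'="\<lambda>x. - (inverse x * inverse x)"])
    show "(inverse has_real_derivative - (inverse x * inverse x)) (at x)" if "x \<in> - {0}" for x
      using that by (auto intro!: derivative_eq_intros simp: power2_eq_square)
    show "Cn_on n (- {0}) (\<lambda>x::real. - (inverse x * inverse x))"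
    proof -
      have h: "Cn_on n (- {0}) (\<lambda>x::real. inverse x * inverse x)"
        using Cn_on_mult[OF Suc.IH Suc.IH] by simp
      show ?thesis using Cn_on_uminus[OF h] by simp
    qed
  qed
qed

lemma Cn_on_compose_real:
  fixes f :: "real \<Rightarrow> real"
  assumes "open S" "Cn_on n T f" "Cn_on n S g" "\<And>x. x \<in> S \<Longrightarrow> g x \<in> T"
  shows "Cn_on n S (\<lambda>x. f (g x))"
  by (rule Cn_on_compose[OF assms(1-3)]) (use assms(4) in blast)

lemma Cn_on_inverse:
  fixes g :: "'a::real_normed_vector \<Rightarrow> real"
  assumes "open S" "Cn_on n S g" "\<And>x. x \<in> S \<Longrightarrow> g x \<noteq> 0"
  shows "Cn_on n S (\<lambda>x. inverse (g x))"
  by (rule Cn_on_compose_real[OF assms(1) Cn_inverse assms(2)]) (use assms(3) in auto)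

lemma Cn_on_divide:
  fixes f g :: "'a::real_normed_vector \<Rightarrow> real"
  assumes "open S" "Cn_on n S f" "Cn_on n S g" "\<And>x. x \<in> S \<Longrightarrow> g x \<noteq> 0"
  shows "Cn_on n S (\<lambda>x. f x / g x)"
  using Cn_on_mult[OF assms(2) Cn_on_inverse[OF assms(1,3,4)]] by (simp add: divide_inverse)

lemma Cn_sqrt: "Cn_on n {0<..} sqrt"
proof (induction n)
  case 0 then show ?case by (simp add: continuous_on_real_sqrt continuous_on_id)
next
  case (Suc n)
  show ?case
  proof (rule Cn_on_SucI_real[where f'="\<lambda>x. inverse (sqrt x) / 2"])
    show "(sqrt has_real_derivative inverse (sqrt x) / 2) (at x)" if "x \<in> {0<..}" for x
      using that by (intro DERIV_real_sqrt) simp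
    have h: "Cn_on n {0<..} (\<lambda>x. inverse (sqrt x))"
      by (rule Cn_on_inverse[OF _ Suc.IH]) auto
    show "Cn_on n {0<..} (\<lambda>x. inverse (sqrt x) / 2)"
      by (rule Cn_on_divide[OF _ h Cn_on_const]) auto
  qed
qed

lemma Cn_on_sqrt:
  fixes g :: "'a::real_normed_vector \<Rightarrow> real"
  assumes "open S" "Cn_on n S g" "\<And>x. x \<in> S \<Longrightarrow> g x > 0"
  shows "Cn_on n S (\<lambda>x. sqrt (g x))"
  by (rule Cn_on_compose_real[OF assms(1) Cn_sqrt assms(2)]) (use assms(3) in auto)

lemma Cn_sin_cos: "Cn_on n UNIV (sin::real\<Rightarrow>real) \<and> Cn_on n UNIV (cos::real\<Rightarrow>real)"
proof (induction n)
  case 0 then show ?case by (auto intro!: continuous_at_imp_continuous_on continuous_intros)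
next
  case (Suc n)
  have "Cn_on (Suc n) UNIV (sin::real\<Rightarrow>real)"
    by (rule Cn_on_SucI_real[where f'=cos, OF DERIV_sin Suc[THEN conjunct2]])
  moreover have "Cn_on (Suc n) UNIV (cos::real\<Rightarrow>real)"
    by (rule Cn_on_SucI_real[where f'="\<lambda>x. - sin x", OF DERIV_cos Cn_on_uminus[OF Suc[THEN conjunct1]]])
  ultimately show ?case by simp
qed

lemma Cn_on_sin:
  fixes g :: "'a::real_normed_vector \<Rightarrow> real"
  assumes "open S" "Cn_on n S g"
  shows "Cn_on n S (\<lambda>x. sin (g x))"
  by (rule Cn_on_compose_real[OF assms(1) Cn_sin_cos[THEN conjunct1] assms(2)]) auto

lemma Cn_on_cos:
  fixes g :: "'a::real_normed_vector \<Rightarrow> real"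
  assumes "open S" "Cn_on n S g"
  shows "Cn_on n S (\<lambda>x. cos (g x))"
  by (rule Cn_on_compose_real[OF assms(1) Cn_sin_cos[THEN conjunct2] assms(2)]) auto

lemma Cn_on_power:
  fixes g :: "'a::real_normed_vector \<Rightarrow> real"
  assumes "Cn_on n S g"
  shows "Cn_on n S (\<lambda>x. (g x) ^ m)"
proof (induction m)
  case 0 then show ?case by (simp add: Cn_on_const)
next
  case (Suc m) then show ?case using Cn_on_mult[OF assms Suc] by simp
qed

lemma Cn_on_pair:
  assumes "Cn_on n S f" "Cn_on n S g"
  shows "Cn_on n S (\<lambda>x. (f x, g x))"
  using assms
proof (induction n arbitrary: f g)
  case 0 then show ?case by (simp add: continuous_on_Pair)
next
  case (Suc n)
  obtain D where D: "\<And>x. x \<in> S \<Longrightarrow> (f has_derivative D x) (at x)"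
    "\<And>v. Cn_on n S (\<lambda>x. D x v)" by (rule Cn_on_SucE[OF Suc.prems(1)]) blast
  obtain E where E: "\<And>x. x \<in> S \<Longrightarrow> (g has_derivative E x) (at x)"
    "\<And>v. Cn_on n S (\<lambda>x. E x v)" by (rule Cn_on_SucE[OF Suc.prems(2)]) blast
  show ?case
  proof (rule Cn_on_SucI[where D="\<lambda>x v. (D x v, E x v)"])
    show "((\<lambda>x. (f x, g x)) has_derivative (\<lambda>v. (D x v, E x v))) (at x)" if "x \<in> S" for x
      using D(1)[OF that] E(1)[OF that] by (rule has_derivative_Pair)
    show "Cn_on n S (\<lambda>x. (D x v, E x v))" for v by (rule Suc.IH[OF D(2) E(2)])
  qed
qed

lemma Cn_on_fst: "Cn_on n S fst"
  by (rule Cn_on_linear[OF bounded_linear_fst])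

lemma Cn_on_snd: "Cn_on n S snd"
  by (rule Cn_on_linear[OF bounded_linear_snd])


lemma Cn_param_integral:
  fixes H :: "('a::euclidean_space \<times> real) \<Rightarrow> real"
  assumes U: "open U" "convex U"
  shows "Cn_on n (U \<times> UNIV) H \<Longrightarrow> Cn_on n U (\<lambda>p. integral {0..1} (\<lambda>s. H (p,s)))"
proof (induction n arbitrary: H)
  case 0
  then have "continuous_on (U \<times> cbox 0 1) (\<lambda>(x, t). H (x, t))"
    by (auto intro: continuous_on_subset)
  from integral_continuous_on_param[OF this] show ?case by simp
next
  case (Suc n)
  obtain D where D: "\<And>z. z \<in> U \<times> UNIV \<Longrightarrow> (H has_derivative D z) (at z)"
    "\<And>w. Cn_on n (U \<times> UNIV) (\<lambda>z. D z w)" by (rule Cn_on_SucE[OF Suc.prems(1)]) blast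
  have blD: "bounded_linear (\<lambda>v. D (p,t) (v,0))" if "p \<in> U" for p t
  proof -
    have "bounded_linear (D (p,t))" using D(1)[of "(p,t)"] that has_derivative_bounded_linear by auto
    then show ?thesis
      using bounded_linear_compose[of "D (p,t)" "\<lambda>v. (v, 0::real)"] bounded_linear_Pair[OF bounded_linear_ident bounded_linear_zero]
      by (simp add: o_def)
  qed
  define fx where "fx p t = Blinfun (\<lambda>v. D (p,t) (v,0))" for p t
  have fx_apply: "blinfun_apply (fx p t) = (\<lambda>v. D (p,t) (v,0))" if "p \<in> U" for p t
    unfolding fx_def using blD[OF that] by (simp add: bounded_linear_Blinfun_apply)
  have derH: "((\<lambda>x. H (x, t)) has_derivative blinfun_apply (fx x t)) (at x within U)" if "x \<in> U" for x t
  proof -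
    have "((\<lambda>x. (x, t)) has_derivative (\<lambda>v. (v, 0))) (at x)"
      by (auto intro!: derivative_eq_intros)
    from diff_chain_at[OF this D(1)[of "(x,t)"]] that
    have "((\<lambda>x. H (x, t)) has_derivative (\<lambda>v. D (x,t) (v,0))) (at x)" by (simp add: o_def)
    then show ?thesis using fx_apply[OF that] has_derivative_at_withinI by metis
  qed
  have contD: "continuous_on (U \<times> UNIV) (\<lambda>z. D z w)" for w using Cn_on_cont[OF D(2)] .
  have cont_fx: "continuous_on (U \<times> cbox 0 1) (\<lambda>(x, t). fx x t)"
  proof (rule continuous_on_blinfun_componentwise)
    fix i :: 'a assume "i \<in> Basis"
    have "continuous_on (U \<times> cbox 0 1) (\<lambda>z. D z (i,0))"
      using contD by (rule continuous_on_subset) auto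
    then show "continuous_on (U \<times> cbox 0 1) (\<lambda>x. blinfun_apply (case x of (x, t) \<Rightarrow> fx x t) i)"
      by (rule continuous_on_cong[THEN iffD1, rotated 2]) (auto simp: fx_apply)
  qed
  have contH: "continuous_on (U \<times> UNIV) H" using Cn_on_cont[OF Suc.prems(1)] .
  have intH: "(\<lambda>t. H (x, t)) integrable_on cbox 0 1" if "x \<in> U" for x
  proof -
    have "continuous_on (cbox 0 1) (\<lambda>t. H (x, t))"
      by (rule continuous_on_compose2[OF contH]) (auto intro!: continuous_intros simp: that)
    then show ?thesis by (rule integrable_continuous)
  qed
  have intfx: "fx x integrable_on cbox 0 1" if "x \<in> U" for x
  proof -
    have "continuous_on (cbox 0 1) (\<lambda>t. fx x t)"
      by (rule continuous_on_compose2[OF cont_fx, where f="\<lambda>t. (x, t)", simplified])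
         (auto intro!: continuous_intros simp: that)
    then show ?thesis by (rule integrable_continuous)
  qed
  define DI where "DI x v = integral {0..1} (\<lambda>t. D (x,t) (v,0))" for x v
  show ?case
  proof (rule Cn_on_SucI[where D=DI])
    fix x assume x: "x \<in> U"
    have "((\<lambda>x. integral (cbox 0 1) (\<lambda>t. H (x, t))) has_derivative integral (cbox 0 1) (fx x)) (at x within U)"
      by (rule leibniz_rule[OF derH intH cont_fx x U(2)])
    then have "((\<lambda>x. integral (cbox 0 1) (\<lambda>t. H (x, t))) has_derivative integral (cbox 0 1) (fx x)) (at x)"
      using at_within_open[OF x U(1)] by simp
    moreover have "blinfun_apply (integral (cbox 0 1) (fx x)) = DI x"
    proof
      fix v
      have "blinfun_apply (integral (cbox 0 1) (fx x)) v = integral (cbox 0 1) (\<lambda>t. blinfun_apply (fx x t) v)"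
        by (rule blinfun_apply_integral[OF intfx[OF x]])
      also have "\<dots> = DI x v" unfolding DI_def using fx_apply[OF x] by simp
      finally show "blinfun_apply (integral (cbox 0 1) (fx x)) v = DI x v" .
    qed
    ultimately show "((\<lambda>p. integral {0..1} (\<lambda>s. H (p, s))) has_derivative DI x) (at x)" by simp
  next
    fix v
    show "Cn_on n U (\<lambda>x. DI x v)" unfolding DI_def by (rule Suc.IH[OF D(2)])
  qed
qed


definition gk :: "real \<Rightarrow> real \<Rightarrow> real" where
  "gk k \<theta> = 1 / sqrt (1 - k\<^sup>2 * (sin \<theta>)\<^sup>2)"

definition U0 :: "(real \<times> real) set" where "U0 = UNIV \<times> {-1<..<1}"

lemma open_U0: "open U0" unfolding U0_def by (intro open_Times) auto
lemma convex_U0: "convex U0" unfolding U0_def by (intro convex_Times) auto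

lemma gk_rad_pos: fixes k \<theta> :: real shows "\<bar>k\<bar> < 1 \<Longrightarrow> 1 - k\<^sup>2 * (sin \<theta>)\<^sup>2 > 0"
proof -
  assume k: "\<bar>k\<bar> < 1"
  have "k\<^sup>2 < 1" using k by (metis abs_square_less_1)
  moreover have "(sin \<theta>)\<^sup>2 \<le> 1" by (simp add: abs_square_le_1)
  ultimately have "k\<^sup>2 * (sin \<theta>)\<^sup>2 < 1"
    by (smt (verit, best) mult_le_cancel_left2 realpow_square_minus_le)
  then show ?thesis by simp
qed

lemma gk_ge1: "\<bar>k\<bar> < 1 \<Longrightarrow> gk k \<theta> \<ge> 1"
proof -
  assume k: "\<bar>k\<bar> < 1"
  have p: "1 - k\<^sup>2 * (sin \<theta>)\<^sup>2 > 0" using gk_rad_pos[OF k] .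
  have "1 - k\<^sup>2 * (sin \<theta>)\<^sup>2 \<le> 1" by simp
  then have "sqrt (1 - k\<^sup>2 * (sin \<theta>)\<^sup>2) \<le> 1" by simp
  moreover have "sqrt (1 - k\<^sup>2 * (sin \<theta>)\<^sup>2) > 0" using p by simp
  ultimately show ?thesis unfolding gk_def by simp
qed

lemma gk_pos: "\<bar>k\<bar> < 1 \<Longrightarrow> gk k \<theta> > 0"
  using gk_ge1[of k \<theta>] by simp

lemma Cn_gk: "Cn_on n U0 (\<lambda>z. gk (snd z) (fst z))"
proof -
  have r: "Cn_on n U0 (\<lambda>z. 1 - (snd z)\<^sup>2 * (sin (fst z))\<^sup>2)"
    by (intro Cn_on_diff Cn_on_const Cn_on_mult Cn_on_power Cn_on_snd Cn_on_sin open_U0 Cn_on_fst)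
  have pos: "z \<in> U0 \<Longrightarrow> 1 - (snd z)\<^sup>2 * (sin (fst z))\<^sup>2 > 0" for z
  proof -
    assume "z \<in> U0"
    then have "\<bar>snd z\<bar> < 1" unfolding U0_def by auto
    then show ?thesis by (rule gk_rad_pos)
  qed
  have "Cn_on n U0 (\<lambda>z. 1 / sqrt (1 - (snd z)\<^sup>2 * (sin (fst z))\<^sup>2))"
  proof (rule Cn_on_divide[OF open_U0 Cn_on_const Cn_on_sqrt[OF open_U0 r pos]])
    fix z assume "z \<in> U0"
    from pos[OF this] show "sqrt (1 - (snd z)\<^sup>2 * (sin (fst z))\<^sup>2) \<noteq> 0" by simp
  qed
  then show ?thesis unfolding gk_def .
qed

lemma cont_gk: "\<bar>k\<bar> < 1 \<Longrightarrow> continuous_on S (gk k)"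
proof -
  assume k: "\<bar>k\<bar> < 1"
  have nz: "sqrt (1 - k\<^sup>2 * (sin \<theta>)\<^sup>2) \<noteq> 0" for \<theta>
  proof -
    have "1 - k\<^sup>2 * (sin \<theta>)\<^sup>2 > 0" by (rule gk_rad_pos[OF k])
    then show ?thesis by simp
  qed
  have "continuous_on S (\<lambda>\<theta>. 1 / sqrt (1 - k\<^sup>2 * (sin \<theta>)\<^sup>2))"
    using nz by (intro continuous_intros) auto
  then show ?thesis unfolding gk_def by (simp add: o_def)
qed

definition F2 :: "real \<Rightarrow> real \<Rightarrow> real" where
  "F2 \<phi> k = integral {0..1} (\<lambda>s. \<phi> * gk k (\<phi> * s))"

lemma Cn_F2: "Cn_on n U0 (\<lambda>z. F2 (fst z) (snd z))"
proof -
  let ?H = "\<lambda>w::(real \<times> real) \<times> real. fst (fst w) * gk (snd (fst w)) (fst (fst w) * snd w)"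
  have o: "open (U0 \<times> (UNIV::real set))" by (intro open_Times open_U0) auto
  have ff: "Cn_on n (U0 \<times> UNIV) (\<lambda>w::(real \<times> real) \<times> real. fst (fst w))"
    by (rule Cn_on_blinear_comp[OF bounded_linear_fst Cn_on_fst])
  have sf: "Cn_on n (U0 \<times> UNIV) (\<lambda>w::(real \<times> real) \<times> real. snd (fst w))"
    by (rule Cn_on_blinear_comp[OF bounded_linear_snd Cn_on_fst])
  have pm: "Cn_on n (U0 \<times> UNIV) (\<lambda>w::(real \<times> real) \<times> real. (fst (fst w) * snd w, snd (fst w)))"
    by (rule Cn_on_pair[OF Cn_on_mult[OF ff Cn_on_snd] sf])
  have c: "Cn_on n (U0 \<times> UNIV) (\<lambda>w::(real \<times> real) \<times> real. gk (snd (fst w)) (fst (fst w) * snd w))"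
    using Cn_on_compose[OF o Cn_gk pm] unfolding U0_def by (auto simp: image_def)
  have "Cn_on n (U0 \<times> UNIV) ?H" by (rule Cn_on_mult[OF ff c])
  from Cn_param_integral[OF open_U0 convex_U0 this]
  show ?thesis unfolding F2_def by simp
qed

lemma ellF_gk: "ellF \<phi> k = (if 0 \<le> \<phi> then integral {0..\<phi>} (gk k) else - integral {\<phi>..0} (gk k))"
proof -
  have gdef: "(\<lambda>\<theta>. 1 / sqrt (1 - k\<^sup>2 * (sin \<theta>)\<^sup>2)) = gk k" by (simp add: gk_def fun_eq_iff)
  show ?thesis unfolding ellF_def gdef ..
qed

lemma ellF_eq_F2:
  assumes k: "\<bar>k\<bar> < 1"
  shows "ellF \<phi> k = F2 \<phi> k"
proof (cases "\<phi> = 0")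
  case True then show ?thesis by (simp add: ellF_def F2_def)
next
  case False
  have gdef: "(\<lambda>\<theta>. 1 / sqrt (1 - k\<^sup>2 * (sin \<theta>)\<^sup>2)) = gk k" by (simp add: gk_def fun_eq_iff)
  have int: "gk k integrable_on {a..b}" for a b
    by (rule integrable_continuous_interval[OF cont_gk[OF k]])
  show ?thesis
  proof (cases "\<phi> > 0")
    case True
    have "(gk k has_integral integral {0..\<phi>} (gk k)) (cbox 0 \<phi>)"
      using integrable_integral[OF int[of 0 \<phi>]] by simp
    from has_integral_affinity[OF this False, of 0]
    have "((\<lambda>x. gk k (\<phi> * x)) has_integral (1 / \<bar>\<phi>\<bar>) * integral {0..\<phi>} (gk k))
            ((\<lambda>x. (1 / \<phi>) * x) ` {0..\<phi>})" by simp
    moreover have "(\<lambda>x. (1 / \<phi>) * x) ` {0..\<phi>} = {0..1}"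
      using image_affinity_atLeastAtMost[of "1/\<phi>" 0 0 \<phi>] True by simp
    ultimately have "((\<lambda>x. gk k (\<phi> * x)) has_integral (1 / \<phi>) * integral {0..\<phi>} (gk k)) {0..1}"
      using True by simp
    from has_integral_mult_right[OF this, of \<phi>]
    have "((\<lambda>x. \<phi> * gk k (\<phi> * x)) has_integral integral {0..\<phi>} (gk k)) {0..1}"
      using True by simp
    then have "integral {0..1} (\<lambda>x. \<phi> * gk k (\<phi> * x)) = integral {0..\<phi>} (gk k)"
      by (rule integral_unique)
    then show ?thesis unfolding F2_def ellF_gk using True by simp
  next
    case neg: False
    then have n: "\<phi> < 0" using \<open>\<phi> \<noteq> 0\<close> by simp
    have "(gk k has_integral integral {\<phi>..0} (gk k)) (cbox \<phi> 0)"
      using integrable_integral[OF int[of \<phi> 0]] by simp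
    from has_integral_affinity[OF this False, of 0]
    have "((\<lambda>x. gk k (\<phi> * x)) has_integral (1 / \<bar>\<phi>\<bar>) * integral {\<phi>..0} (gk k))
            ((\<lambda>x. (1 / \<phi>) * x) ` {\<phi>..0})" by simp
    moreover have "(\<lambda>x. (1 / \<phi>) * x) ` {\<phi>..0} = {0..1}"
      using image_affinity_atLeastAtMost[of "1/\<phi>" 0 \<phi> 0] n by simp
    ultimately have "((\<lambda>x. gk k (\<phi> * x)) has_integral (- 1 / \<phi>) * integral {\<phi>..0} (gk k)) {0..1}"
      using n by simp
    from has_integral_mult_right[OF this, of \<phi>]
    have "((\<lambda>x. \<phi> * gk k (\<phi> * x)) has_integral - integral {\<phi>..0} (gk k)) {0..1}"
      using n by simp
    then have "integral {0..1} (\<lambda>x. \<phi> * gk k (\<phi> * x)) = - integral {\<phi>..0} (gk k)"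
      by (rule integral_unique)
    then show ?thesis unfolding F2_def ellF_gk using n by simp
  qed
qed

lemma ellF_deriv:
  assumes k: "\<bar>k\<bar> < 1"
  shows "((\<lambda>\<phi>. ellF \<phi> k) has_real_derivative gk k \<phi>0) (at \<phi>0)"
proof -
  define M where "M = \<bar>\<phi>0\<bar> + 1"
  have M: "M > 0" "-M < \<phi>0" "\<phi>0 < M" unfolding M_def by auto
  have int: "gk k integrable_on {a..b}" for a b
    by (rule integrable_continuous_interval[OF cont_gk[OF k]])
  have eq: "ellF \<phi> k = integral {-M..\<phi>} (gk k) - integral {-M..0} (gk k)" if "\<phi> \<in> {-M<..<M}" for \<phi>
  proof (cases "0 \<le> \<phi>")
    case True
    have "integral {-M..0} (gk k) + integral {0..\<phi>} (gk k) = integral {-M..\<phi>} (gk k)"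
      using Henstock_Kurzweil_Integration.integral_combine[where a="-M" and c=0 and b=\<phi> and f="gk k"] True M int by simp
    then show ?thesis unfolding ellF_gk using True by simp
  next
    case False
    have "integral {-M..\<phi>} (gk k) + integral {\<phi>..0} (gk k) = integral {-M..0} (gk k)"
      using Henstock_Kurzweil_Integration.integral_combine[where a="-M" and c=\<phi> and b=0 and f="gk k"] False that int by simp
    then show ?thesis unfolding ellF_gk using False by simp
  qed
  have "((\<lambda>x. integral {-M..x} (gk k)) has_real_derivative gk k \<phi>0) (at \<phi>0 within {-M..M})"
    by (rule integral_has_real_derivative[OF cont_gk[OF k]]) (use M in auto)
  then have "((\<lambda>x. integral {-M..x} (gk k)) has_real_derivative gk k \<phi>0) (at \<phi>0 within {-M<..<M})"
    by (rule has_field_derivative_subset) auto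
  then have "((\<lambda>x. integral {-M..x} (gk k)) has_real_derivative gk k \<phi>0) (at \<phi>0)"
    using at_within_open[of \<phi>0 "{-M<..<M}"] M by simp
  then have "((\<lambda>x. integral {-M..x} (gk k) - integral {-M..0} (gk k)) has_real_derivative gk k \<phi>0) (at \<phi>0)"
    by (auto intro!: derivative_eq_intros)
  then show ?thesis
    by (rule has_field_derivative_transform_within_open[of _ _ _ "{-M<..<M}"]) (use M eq in auto)
qed

lemma ellF_0: "ellF 0 k = 0" by (simp add: ellF_def)

lemma ellF_ge: "\<bar>k\<bar> < 1 \<Longrightarrow> 0 \<le> \<phi> \<Longrightarrow> ellF \<phi> k \<ge> \<phi>"
proof -
  assume k: "\<bar>k\<bar> < 1" and p: "0 \<le> \<phi>"
  have "integral {0..\<phi>} (\<lambda>x. 1::real) \<le> integral {0..\<phi>} (gk k)"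
    by (rule integral_le) (auto intro: integrable_continuous_interval[OF cont_gk[OF k]] gk_ge1[OF k])
  then show ?thesis unfolding ellF_gk using p by simp
qed

lemma ellF_le: "\<bar>k\<bar> < 1 \<Longrightarrow> \<phi> \<le> 0 \<Longrightarrow> ellF \<phi> k \<le> \<phi>"
proof -
  assume k: "\<bar>k\<bar> < 1" and p: "\<phi> \<le> 0"
  have "integral {\<phi>..0} (\<lambda>x. 1::real) \<le> integral {\<phi>..0} (gk k)"
    by (rule integral_le) (auto intro: integrable_continuous_interval[OF cont_gk[OF k]] gk_ge1[OF k])
  then show ?thesis unfolding ellF_gk using p by (cases "\<phi> = 0") auto
qed

lemma ellF_strict_mono: "\<bar>k\<bar> < 1 \<Longrightarrow> a < b \<Longrightarrow> ellF a k < ellF b k"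
  by (rule DERIV_pos_imp_increasing[where f="\<lambda>\<phi>. ellF \<phi> k"]) (auto intro: ellF_deriv gk_pos)

lemma ellF_cont: "\<bar>k\<bar> < 1 \<Longrightarrow> isCont (\<lambda>\<phi>. ellF \<phi> k) x"
  using ellF_deriv DERIV_isCont by blast

lemma ellF_ex1: "\<bar>k\<bar> < 1 \<Longrightarrow> \<exists>!\<phi>. ellF \<phi> k = u"
proof -
  assume k: "\<bar>k\<bar> < 1"
  have "ellF (-\<bar>u\<bar>) k \<le> u" using ellF_le[OF k, of "-\<bar>u\<bar>"] by simp
  moreover have "u \<le> ellF \<bar>u\<bar> k" using ellF_ge[OF k, of "\<bar>u\<bar>"] by simp
  ultimately obtain \<phi> where "ellF \<phi> k = u"
    using IVT[of "\<lambda>\<phi>. ellF \<phi> k" "-\<bar>u\<bar>" u "\<bar>u\<bar>"] ellF_cont[OF k] by auto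
  moreover have "ellF \<psi> k = u \<Longrightarrow> \<psi> = \<phi>" for \<psi>
    using ellF_strict_mono[OF k, of \<psi> \<phi>] ellF_strict_mono[OF k, of \<phi> \<psi>] \<open>ellF \<phi> k = u\<close>
    by (cases "\<psi> < \<phi>"; cases "\<phi> < \<psi>") auto
  ultimately show ?thesis by blast
qed

lemma ellF_jam: "\<bar>k\<bar> < 1 \<Longrightarrow> ellF (jam u k) k = u"
  unfolding jam_def by (rule theI'[OF ellF_ex1])

lemma jam_ellF: "\<bar>k\<bar> < 1 \<Longrightarrow> jam (ellF \<phi> k) k = \<phi>"
  unfolding jam_def by (rule the1_equality[OF ellF_ex1]) auto


lemma smooth_deriv:
  assumes "open S" "\<And>n. Cn_on n S f"
  obtains D where "\<And>x. x \<in> S \<Longrightarrow> (f has_derivative D x) (at x)" "\<And>v n. Cn_on n S (\<lambda>x. D x v)"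
proof -
  obtain D where D: "\<And>x. x \<in> S \<Longrightarrow> (f has_derivative D x) (at x)" "\<And>v. Cn_on 0 S (\<lambda>x. D x v)"
    by (rule Cn_on_SucE[OF assms(2)[of "Suc 0"]]) blast
  have Dn: "Cn_on n S (\<lambda>x. D x v)" for v n
  proof -
    obtain E where E: "\<And>x. x \<in> S \<Longrightarrow> (f has_derivative E x) (at x)" "\<And>v. Cn_on n S (\<lambda>x. E x v)"
      by (rule Cn_on_SucE[OF assms(2)[of "Suc n"]]) blast
    have eq: "E x v = D x v" if "x \<in> S" for x
      using has_derivative_unique[OF E(1)[OF that] D(1)[OF that]] by simp
    show ?thesis by (rule Cn_on_cong[OF assms(1) eq E(2)])
  qed
  show ?thesis by (rule that[OF D(1) Dn])
qed

definition Fp :: "real \<times> real \<Rightarrow> real" where "Fp z = ellF (fst z) (snd z)"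
definition Jp :: "real \<times> real \<Rightarrow> real" where "Jp w = jam (fst w) (snd w)"

lemma U0_iff: "z \<in> U0 \<longleftrightarrow> \<bar>snd z\<bar> < 1" unfolding U0_def by (cases z) auto

lemma Cn_Fp: "Cn_on n U0 Fp"
  by (rule Cn_on_cong[OF open_U0 _ Cn_F2]) (auto simp: Fp_def U0_iff ellF_eq_F2)

definition DFp :: "real \<times> real \<Rightarrow> real \<times> real \<Rightarrow> real" where
  "DFp z = (SOME D. (Fp has_derivative D) (at z))"

lemma DFp_and_Cn: "(\<forall>z\<in>U0. (Fp has_derivative DFp z) (at z)) \<and> (\<forall>v n. Cn_on n U0 (\<lambda>z. DFp z v))"
proof -
  obtain D where D: "\<And>x. x \<in> U0 \<Longrightarrow> (Fp has_derivative D x) (at x)" "\<And>v n. Cn_on n U0 (\<lambda>x. D x v)"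
    by (rule smooth_deriv[OF open_U0 Cn_Fp]) blast
  have der: "(Fp has_derivative DFp z) (at z)" if "z \<in> U0" for z
    unfolding DFp_def by (rule someI[of _ "D z"]) (rule D(1)[OF that])
  have "Cn_on n U0 (\<lambda>z. DFp z v)" for v n
  proof (rule Cn_on_cong[OF open_U0 _ D(2)])
    fix z assume "z \<in> U0"
    show "D z v = DFp z v" using has_derivative_unique[OF D(1) der, OF \<open>z \<in> U0\<close> \<open>z \<in> U0\<close>] by simp
  qed
  then show ?thesis using der by blast
qed

lemma DFp: "z \<in> U0 \<Longrightarrow> (Fp has_derivative DFp z) (at z)"
  using DFp_and_Cn by blast

lemma Cn_DFp: "Cn_on n U0 (\<lambda>z. DFp z v)"
  using DFp_and_Cn by blast

definition Fk :: "real \<times> real \<Rightarrow> real" where "Fk z = DFp z (0,1)"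

lemma Cn_Fk: "Cn_on n U0 Fk"
  unfolding Fk_def by (rule Cn_DFp)

lemma DFp_apply:
  assumes z: "z \<in> U0"
  shows "DFp z v = fst v * gk (snd z) (fst z) + snd v * Fk z"
proof -
  obtain \<phi> k where zz: "z = (\<phi>, k)" by (cases z)
  have k: "\<bar>k\<bar> < 1" using z zz U0_iff by simp
  have lin: "linear (DFp z)" using DFp[OF z] has_derivative_linear by blast
  have "((\<lambda>x. (x, k)) has_derivative (\<lambda>v. (v, 0))) (at \<phi>)"
    by (auto intro!: derivative_eq_intros)
  from diff_chain_at[OF this DFp[OF z, unfolded zz]]
  have d1: "((\<lambda>x. Fp (x, k)) has_derivative (\<lambda>v. DFp (\<phi>, k) (v, 0))) (at \<phi>)" by (simp add: o_def)
  have d2: "((\<lambda>x. Fp (x, k)) has_derivative (*) (gk k \<phi>)) (at \<phi>)"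
    using ellF_deriv[OF k, of \<phi>] unfolding Fp_def has_field_derivative_def by simp
  have "(\<lambda>v. DFp (\<phi>, k) (v, 0)) = (*) (gk k \<phi>)" by (rule has_derivative_unique[OF d1 d2])
  from fun_cong[OF this, of 1] have e1: "DFp z (1, 0) = gk k \<phi>" using zz by simp
  obtain a b where v: "v = (a, b)" by (cases v)
  have "DFp z (a, b) = DFp z (a *\<^sub>R (1,0) + b *\<^sub>R (0,1))" by simp
  also have "\<dots> = a *\<^sub>R DFp z (1,0) + b *\<^sub>R DFp z (0,1)"
    by (simp only: linear_add[OF lin] linear_scale[OF lin])
  finally show ?thesis using e1 zz v unfolding Fk_def by simp
qed

lemma Jp_in: "w \<in> U0 \<Longrightarrow> (Jp w, snd w) \<in> U0" by (simp add: U0_iff)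

lemma Jp_deriv:
  assumes w: "w \<in> U0"
  shows "(Jp has_derivative (\<lambda>v. (fst v - Fk (Jp w, snd w) * snd v) / gk (snd w) (Jp w))) (at w)"
proof -
  define z where "z = (Jp w, snd w)"
  have z: "z \<in> U0" unfolding z_def by (rule Jp_in[OF w])
  have k: "\<bar>snd w\<bar> < 1" using w U0_iff by simp
  define G where "G z = (Fp z, snd z)" for z
  define Hm where "Hm w = (Jp w, snd w)" for w
  define G' where "G' v = (DFp z v, snd v)" for v
  define H' where "H' v = ((fst v - Fk z * snd v) / gk (snd z) (fst z), snd v)" for v
  have Gz: "G z = w" unfolding G_def z_def Fp_def Jp_def using ellF_jam[OF k] by (cases w) simp
  have cont: "continuous_on U0 G" unfolding G_def
    by (intro continuous_on_Pair Cn_on_cont[OF Cn_Fp] continuous_on_snd continuous_on_id)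
  have HG: "Hm (G x) = x" if "x \<in> U0" for x
    using that unfolding Hm_def G_def Jp_def Fp_def U0_iff by (cases x) (simp add: jam_ellF)
  have dG: "(G has_derivative G') (at z)" unfolding G_def G'_def
    by (intro has_derivative_Pair DFp[OF z] has_derivative_snd has_derivative_ident)
  have gpos: "gk (snd z) (fst z) > 0" using z U0_iff gk_pos by simp
  have id: "G' \<circ> H' = id"
  proof
    fix v :: "real \<times> real"
    show "(G' \<circ> H') v = id v"
      unfolding G'_def H'_def o_def using DFp_apply[OF z] gpos by (cases v) (simp add: field_simps)
  qed
  have "(Hm has_derivative H') (at (G z))"
    by (rule has_derivative_inverse_strong[OF open_U0 z cont HG dG id])
  then have "((\<lambda>w. fst (Hm w)) has_derivative (\<lambda>v. fst (H' v))) (at w)"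
    using Gz by (intro has_derivative_fst) simp
  then show ?thesis unfolding Hm_def H'_def z_def by simp
qed

lemma Cn_Jp: "Cn_on n U0 Jp"
proof (induction n)
  case 0
  have "continuous_on U0 Jp"
    using Jp_deriv by (meson continuous_at_imp_continuous_on has_derivative_continuous)
  then show ?case by simp
next
  case (Suc n)
  have pr: "Cn_on n U0 (\<lambda>w. (Jp w, snd w))" by (rule Cn_on_pair[OF Suc.IH Cn_on_snd])
  have im: "(\<lambda>w. (Jp w, snd w)) ` U0 \<subseteq> U0" using Jp_in by auto
  have c1: "Cn_on n U0 (\<lambda>w. Fk (Jp w, snd w))" by (rule Cn_on_compose[OF open_U0 Cn_Fk pr im])
  have c2: "Cn_on n U0 (\<lambda>w. gk (snd w) (Jp w))"
    using Cn_on_compose[OF open_U0 Cn_gk pr im] by simp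
  show ?case
  proof (rule Cn_on_SucI[OF Jp_deriv])
    fix v :: "real \<times> real"
    show "Cn_on n U0 (\<lambda>w. (fst v - Fk (Jp w, snd w) * snd v) / gk (snd w) (Jp w))"
    proof (rule Cn_on_divide[OF open_U0 Cn_on_diff[OF Cn_on_const Cn_on_mult[OF c1 Cn_on_const]] c2])
      fix w assume "w \<in> U0" then show "gk (snd w) (Jp w) \<noteq> 0" using gk_pos U0_iff by (metis less_irrefl)
    qed
  qed assumption
qed

lemma jam_deriv:
  assumes k: "\<bar>k\<bar> < 1"
  shows "((\<lambda>u. jam u k) has_real_derivative sqrt (1 - k\<^sup>2 * (sin (jam u k))\<^sup>2)) (at u)"
proof -
  have w: "(u, k) \<in> U0" using k U0_iff by simp
  have "((\<lambda>x. (x, k)) has_derivative (\<lambda>v. (v, 0))) (at u)"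
    by (auto intro!: derivative_eq_intros)
  from diff_chain_at[OF this Jp_deriv[OF w]]
  have "((\<lambda>x. jam x k) has_derivative (\<lambda>v. v / gk k (jam u k))) (at u)"
    by (simp add: o_def Jp_def)
  moreover have "(\<lambda>v. v / gk k (jam u k)) = (*) (sqrt (1 - k\<^sup>2 * (sin (jam u k))\<^sup>2))"
    using gk_rad_pos[OF k, of "jam u k"] by (auto simp: fun_eq_iff gk_def)
  ultimately show ?thesis unfolding has_field_derivative_def by simp
qed


lemma gk_even: "gk k (-x) = gk k x" by (simp add: gk_def)
lemma gk_pi: "gk k (x + pi) = gk k x" by (simp add: gk_def)
lemma gk_refl: "gk k (pi/2 + x) = gk k (pi/2 - x)" by (simp add: gk_def sin_add sin_diff)

lemma ellF_odd:
  assumes k: "\<bar>k\<bar> < 1"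
  shows "ellF (-\<phi>) k = - ellF \<phi> k"
proof -
  have hd: "DERIV (\<lambda>x. ellF x k + ellF (-x) k) x :> 0" for x
  proof -
    have "DERIV (\<lambda>x. ellF (-x) k) x :> gk k (-x) * (-1)"
      by (rule DERIV_chain2[OF ellF_deriv[OF k]]) (auto intro!: derivative_eq_intros)
    from DERIV_add[OF ellF_deriv[OF k] this] show ?thesis by (simp add: gk_even)
  qed
  have "ellF \<phi> k + ellF (-\<phi>) k = ellF 0 k + ellF (-0) k"
    using DERIV_isconst_all[of "\<lambda>x. ellF x k + ellF (-x) k" \<phi> 0] hd by blast
  then show ?thesis by (simp add: ellF_0)
qed

lemma ellF_shift_pi:
  assumes k: "\<bar>k\<bar> < 1"
  shows "ellF (\<phi> + pi) k = ellF \<phi> k + ellF pi k"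
proof -
  have hd: "DERIV (\<lambda>x. ellF (x + pi) k - ellF x k) x :> 0" for x
  proof -
    have "DERIV (\<lambda>x. ellF (x + pi) k) x :> gk k (x + pi) * 1"
      by (rule DERIV_chain2[OF ellF_deriv[OF k]]) (auto intro!: derivative_eq_intros)
    from DERIV_diff[OF this ellF_deriv[OF k]] show ?thesis by (simp add: gk_pi)
  qed
  have "ellF (\<phi> + pi) k - ellF \<phi> k = ellF (0 + pi) k - ellF 0 k"
    using DERIV_isconst_all[of "\<lambda>x. ellF (x + pi) k - ellF x k" \<phi> 0] hd by blast
  then show ?thesis by (simp add: ellF_0)
qed

lemma ellF_halfpi: "ellF (pi/2) k = ellK k"
  by (simp add: ellF_def ellK_def)

lemma ellF_pi:
  assumes k: "\<bar>k\<bar> < 1"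
  shows "ellF pi k = 2 * ellK k"
proof -
  have hd: "DERIV (\<lambda>x. ellF (pi/2 + x) k + ellF (pi/2 - x) k) x :> 0" for x
  proof -
    have d1: "DERIV (\<lambda>x. ellF (pi/2 + x) k) x :> gk k (pi/2 + x) * 1"
      by (rule DERIV_chain2[OF ellF_deriv[OF k]]) (auto intro!: derivative_eq_intros)
    have d2: "DERIV (\<lambda>x. ellF (pi/2 - x) k) x :> gk k (pi/2 - x) * (-1)"
      by (rule DERIV_chain2[OF ellF_deriv[OF k]]) (auto intro!: derivative_eq_intros)
    from DERIV_add[OF d1 d2] show ?thesis by (simp add: gk_refl)
  qed
  have "ellF (pi/2 + pi/2) k + ellF (pi/2 - pi/2) k = ellF (pi/2 + 0) k + ellF (pi/2 - 0) k"
    using DERIV_isconst_all[of "\<lambda>x. ellF (pi/2 + x) k + ellF (pi/2 - x) k" "pi/2" 0] hd by blast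
  then show ?thesis by (simp add: ellF_0 ellF_halfpi)
qed

lemma jam_odd:
  assumes k: "\<bar>k\<bar> < 1"
  shows "jam (-u) k = - jam u k"
proof -
  have "ellF (- jam u k) k = -u" using ellF_odd[OF k] ellF_jam[OF k] by simp
  then show ?thesis using jam_ellF[OF k, of "- jam u k"] by simp
qed

lemma jam_shift:
  assumes k: "\<bar>k\<bar> < 1"
  shows "jam (u + 2 * ellK k) k = jam u k + pi"
proof -
  have "ellF (jam u k + pi) k = u + 2 * ellK k"
    using ellF_shift_pi[OF k] ellF_jam[OF k] ellF_pi[OF k] by simp
  then show ?thesis using jam_ellF[OF k, of "jam u k + pi"] by simp
qed

lemma jam_shift4:
  assumes k: "\<bar>k\<bar> < 1"
  shows "jam (u + 4 * ellK k) k = jam u k + 2 * pi"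
  using jam_shift[OF k, of "u + 2 * ellK k"] jam_shift[OF k, of u] by (simp add: algebra_simps)


lemma gk_dk:
  assumes k: "\<bar>k\<bar> < 1"
  shows "((\<lambda>k. gk k \<theta>) has_real_derivative k * (sin \<theta>)\<^sup>2 * (gk k \<theta>)^3) (at k)"
proof -
  define r where "r = 1 - k\<^sup>2 * (sin \<theta>)\<^sup>2"
  have r: "r > 0" unfolding r_def by (rule gk_rad_pos[OF k])
  have "((\<lambda>k. 1 / sqrt (1 - k\<^sup>2 * (sin \<theta>)\<^sup>2)) has_real_derivative
     - (inverse (sqrt r) / 2 * (- (2 * k) * (sin \<theta>)\<^sup>2)) / (sqrt r)\<^sup>2) (at k)"
    unfolding r_def using r[unfolded r_def]
    by (auto intro!: derivative_eq_intros simp: power2_eq_square)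
  moreover have "- (inverse (sqrt r) / 2 * (- (2 * k) * (sin \<theta>)\<^sup>2)) / (sqrt r)\<^sup>2 = k * (sin \<theta>)\<^sup>2 * (1 / sqrt r)^3"
    using r by (simp add: field_simps power2_eq_square power3_eq_cube)
  ultimately show ?thesis unfolding gk_def r_def by simp
qed

lemma gk_dtheta:
  assumes k: "\<bar>k\<bar> < 1"
  shows "((\<lambda>\<theta>. gk k \<theta>) has_real_derivative k\<^sup>2 * sin \<theta> * cos \<theta> * (gk k \<theta>)^3) (at \<theta>)"
proof -
  define r where "r = 1 - k\<^sup>2 * (sin \<theta>)\<^sup>2"
  have r: "r > 0" unfolding r_def by (rule gk_rad_pos[OF k])
  have "((\<lambda>\<theta>. 1 / sqrt (1 - k\<^sup>2 * (sin \<theta>)\<^sup>2)) has_real_derivative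
     - (inverse (sqrt r) / 2 * (- (k\<^sup>2 * (2 * sin \<theta> * cos \<theta>)))) / (sqrt r)\<^sup>2) (at \<theta>)"
    unfolding r_def using r[unfolded r_def]
    by (auto intro!: derivative_eq_intros simp: power2_eq_square)
  moreover have "- (inverse (sqrt r) / 2 * (- (k\<^sup>2 * (2 * sin \<theta> * cos \<theta>)))) / (sqrt r)\<^sup>2 = k\<^sup>2 * sin \<theta> * cos \<theta> * (1 / sqrt r)^3"
    using r by (simp add: field_simps power2_eq_square power3_eq_cube)
  ultimately show ?thesis unfolding gk_def r_def by simp
qed

lemma ellK_gk: "ellK k = integral {0..pi/2} (gk k)"
  unfolding ellK_def gk_def ..

lemma ellK_0: "ellK 0 = pi/2"
proof -
  have "gk 0 = (\<lambda>_. 1)" by (simp add: gk_def fun_eq_iff)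
  then show ?thesis unfolding ellK_gk by simp
qed

lemma ellK_ge: "\<bar>k\<bar> < 1 \<Longrightarrow> ellK k \<ge> pi/2"
  using ellF_ge[of k "pi/2"] ellF_halfpi[of k] by simp

lemma ellK_pos: "\<bar>k\<bar> < 1 \<Longrightarrow> ellK k > 0"
  using ellK_ge[of k] pi_gt_zero by linarith

lemma Cn_ellK: "Cn_on n {-1<..<1} ellK"
proof -
  have pr: "Cn_on n {-1<..<1} (\<lambda>k::real. (pi/2, k))" by (rule Cn_on_pair[OF Cn_on_const Cn_on_id])
  have h: "Cn_on n {-1<..<1} (\<lambda>k. Fp (pi/2, k))"
    by (rule Cn_on_compose[OF _ Cn_Fp pr]) (auto simp: U0_iff)
  show ?thesis
    by (rule Cn_on_cong[OF _ _ h]) (auto simp: Fp_def ellF_halfpi)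
qed

definition Kd :: "real \<Rightarrow> real" where
  "Kd k = integral {0..pi/2} (\<lambda>\<theta>. k * (sin \<theta>)\<^sup>2 * (gk k \<theta>)^3)"

lemma ellK_deriv:
  assumes k: "\<bar>k\<bar> < 1"
  shows "(ellK has_real_derivative Kd k) (at k)"
proof -
  let ?U = "{-1<..<1::real}"
  have kU: "k \<in> ?U" using k by auto
  have "((\<lambda>x. integral (cbox 0 (pi/2)) (\<lambda>\<theta>. gk x \<theta>)) has_field_derivative
          integral (cbox 0 (pi/2)) (\<lambda>\<theta>. k * (sin \<theta>)\<^sup>2 * (gk k \<theta>)^3)) (at k within ?U)"
  proof (rule leibniz_rule_field_derivative[where fx="\<lambda>x \<theta>. x * (sin \<theta>)\<^sup>2 * (gk x \<theta>)^3"])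
    fix x t assume "x \<in> ?U" "t \<in> cbox 0 (pi/2)"
    then have "\<bar>x\<bar> < 1" by auto
    from gk_dk[OF this, of t] show "((\<lambda>x. gk x t) has_field_derivative x * (sin t)\<^sup>2 * (gk x t)^3) (at x within ?U)"
      by (rule has_field_derivative_at_within)
  next
    fix x assume "x \<in> ?U"
    then have "\<bar>x\<bar> < 1" by auto
    show "(\<lambda>\<theta>. gk x \<theta>) integrable_on cbox 0 (pi/2)"
      using integrable_continuous_interval[OF cont_gk[OF \<open>\<bar>x\<bar> < 1\<close>]] by simp
  next
    have nz: "sqrt (1 - (fst z)\<^sup>2 * (sin (snd z))\<^sup>2) \<noteq> 0" if "z \<in> ?U \<times> cbox 0 (pi/2)" for z
    proof -
      have "\<bar>fst z\<bar> < 1" using that by auto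
      from gk_rad_pos[OF this, of "snd z"] show ?thesis by simp
    qed
    have "continuous_on (?U \<times> cbox 0 (pi/2)) (\<lambda>z. fst z * (sin (snd z))\<^sup>2 * (1 / sqrt (1 - (fst z)\<^sup>2 * (sin (snd z))\<^sup>2))^3)"
      using nz by (intro continuous_intros) auto
    then show "continuous_on (?U \<times> cbox 0 (pi/2)) (\<lambda>(x, t). x * (sin t)\<^sup>2 * (gk x t)^3)"
      by (simp add: split_beta gk_def)
  qed (use kU in auto)
  then have "((\<lambda>x. integral {0..pi/2} (gk x)) has_field_derivative Kd k) (at k within ?U)"
    by (simp add: Kd_def)
  then have "((\<lambda>x. integral {0..pi/2} (gk x)) has_field_derivative Kd k) (at k)"
    using at_within_open[OF kU] by simp
  then show ?thesis unfolding ellK_gk[abs_def] by simp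
qed

lemma Kd_ge:
  assumes k0: "0 \<le> k" and k1: "k < 1"
  shows "Kd k \<ge> k * ellK k / 2"
proof -
  have k: "\<bar>k\<bar> < 1" using k0 k1 by simp
  define A where "A \<theta> = k * (sin \<theta>)\<^sup>2 * (gk k \<theta>)^3" for \<theta>
  define C where "C \<theta> = (cos \<theta> * cos \<theta> - sin \<theta> * sin \<theta>) * gk k \<theta> + sin \<theta> * cos \<theta> * (k\<^sup>2 * sin \<theta> * cos \<theta> * (gk k \<theta>)^3)" for \<theta>
  have dpsi: "((\<lambda>\<theta>. sin \<theta> * cos \<theta> * gk k \<theta>) has_real_derivative C \<theta>) (at \<theta>)" for \<theta>
    unfolding C_def
    by (auto intro!: derivative_eq_intros gk_dtheta[OF k] simp: algebra_simps)
  have C_int: "(C has_integral 0) {0..pi/2}"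
  proof -
    have "(C has_integral (sin (pi/2) * cos (pi/2) * gk k (pi/2) - sin 0 * cos 0 * gk k 0)) {0..pi/2}"
      by (rule fundamental_theorem_of_calculus)
         (auto intro: has_field_derivative_at_within dpsi simp: has_real_derivative_iff_has_vector_derivative[symmetric])
    then show ?thesis by simp
  qed
  have contA: "continuous_on {0..pi/2} A" unfolding A_def
    by (intro continuous_intros cont_gk[OF k])
  have A_int: "(A has_integral Kd k) {0..pi/2}"
    unfolding Kd_def A_def[symmetric] by (rule integrable_integral[OF integrable_continuous_interval[OF contA]])
  have B_int: "(gk k has_integral ellK k) {0..pi/2}"
    unfolding ellK_gk by (rule integrable_integral[OF integrable_continuous_interval[OF cont_gk[OF k]]])
  have all: "((\<lambda>\<theta>. A \<theta> - (k/2) * gk k \<theta> + (k/2) * C \<theta>) has_integral (Kd k - (k/2) * ellK k + (k/2) * 0)) {0..pi/2}"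
    by (intro has_integral_add has_integral_diff has_integral_mult_right A_int B_int C_int)
  have nn: "0 \<le> A \<theta> - (k/2) * gk k \<theta> + (k/2) * C \<theta>" for \<theta>
  proof -
    define g where "g = gk k \<theta>"
    have g1: "g \<ge> 1" unfolding g_def by (rule gk_ge1[OF k])
    have g3: "g^3 \<ge> g" using g1 by (simp add: power3_eq_cube) (metis mult_le_cancel_left1 mult_left_mono less_le_trans zero_less_one order.trans mult.assoc one_le_power power2_eq_square order_refl)
    have cs: "cos \<theta> * cos \<theta> = 1 - sin \<theta> * sin \<theta>" using sin_cos_squared_add[of \<theta>] by (simp add: power2_eq_square)
    have "A \<theta> - (k/2) * gk k \<theta> + (k/2) * C \<theta> = k * (sin \<theta>)\<^sup>2 * (g^3 - g) + (k^3/2) * (sin \<theta>)\<^sup>2 * (cos \<theta>)\<^sup>2 * g^3"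
      unfolding A_def C_def g_def[symmetric]
      by (simp add: algebra_simps power2_eq_square power3_eq_cube)
        (metis distrib_left mult.right_neutral sin_cos_squared_add power2_eq_square add.commute)
    also have "\<dots> \<ge> 0" using g1 g3 k0 by (intro add_nonneg_nonneg mult_nonneg_nonneg) auto
    finally show ?thesis .
  qed
  have "0 \<le> Kd k - (k/2) * ellK k + (k/2) * 0"
    by (rule has_integral_nonneg[OF all]) (use nn in auto)
  then show ?thesis by simp
qed

lemma ellK_big: "\<exists>k. 0 < k \<and> k < 1 \<and> ellK k > M"
proof -
  define c where "c = min (1/2) (pi / (2 * exp M))"
  have c0: "c > 0" unfolding c_def by simp
  have c1: "c \<le> 1/2" unfolding c_def by simp
  have c2: "c \<le> pi / (2 * exp M)" unfolding c_def by simp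
  define k where "k = sqrt (1 - c\<^sup>2)"
  have "c\<^sup>2 \<le> (1/2)\<^sup>2" using c0 c1 by (intro power_mono) auto
  then have cc: "c\<^sup>2 < 1" by (simp add: power2_eq_square)
  have kk: "k\<^sup>2 = 1 - c\<^sup>2" unfolding k_def using cc by simp
  have k0: "0 < k" unfolding k_def using cc by simp
  have k1: "k < 1" unfolding k_def using c0 cc by simp
  have kabs: "\<bar>k\<bar> < 1" using k0 k1 by simp
  have low: "1 / (c + (pi/2 - \<theta>)) \<le> gk k \<theta>" if th: "\<theta> \<in> {0..pi/2}" for \<theta>
  proof -
    have r: "1 - k\<^sup>2 * (sin \<theta>)\<^sup>2 = (cos \<theta>)\<^sup>2 + c\<^sup>2 * (sin \<theta>)\<^sup>2"
    proof -
      have "1 - k\<^sup>2 * (sin \<theta>)\<^sup>2 = ((sin \<theta>)\<^sup>2 + (cos \<theta>)\<^sup>2) - (1 - c\<^sup>2) * (sin \<theta>)\<^sup>2"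
        using sin_cos_squared_add[of \<theta>] kk by simp
      also have "\<dots> = (cos \<theta>)\<^sup>2 + c\<^sup>2 * (sin \<theta>)\<^sup>2" by (simp add: algebra_simps)
      finally show ?thesis .
    qed
    have cos0: "cos \<theta> \<ge> 0" using th by (intro cos_ge_zero) auto
    have "cos \<theta> = sin (pi/2 - \<theta>)" by (simp add: sin_cos_eq)
    also have "\<dots> \<le> pi/2 - \<theta>" using th by (intro sin_x_le_x) auto
    finally have cle: "cos \<theta> \<le> pi/2 - \<theta>" .
    have "(cos \<theta>)\<^sup>2 + c\<^sup>2 * (sin \<theta>)\<^sup>2 \<le> (cos \<theta>)\<^sup>2 + c\<^sup>2"
      using c0 by (simp add: mult_left_le abs_square_le_1)
    also have "\<dots> \<le> (cos \<theta> + c)\<^sup>2" using cos0 c0 by (simp add: power2_eq_square algebra_simps)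
    also have "\<dots> \<le> (c + (pi/2 - \<theta>))\<^sup>2" using cos0 c0 cle by (intro power_mono) auto
    finally have sq: "(cos \<theta>)\<^sup>2 + c\<^sup>2 * (sin \<theta>)\<^sup>2 \<le> (c + (pi/2 - \<theta>))\<^sup>2" .
    have "sqrt (1 - k\<^sup>2 * (sin \<theta>)\<^sup>2) = sqrt ((cos \<theta>)\<^sup>2 + c\<^sup>2 * (sin \<theta>)\<^sup>2)" using r by simp
    also have "\<dots> \<le> sqrt ((c + (pi/2 - \<theta>))\<^sup>2)" by (rule real_sqrt_le_mono[OF sq])
    also have "\<dots> = c + (pi/2 - \<theta>)" using c0 th by simp
    finally have le: "sqrt (1 - k\<^sup>2 * (sin \<theta>)\<^sup>2) \<le> c + (pi/2 - \<theta>)" .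
    have pos: "sqrt (1 - k\<^sup>2 * (sin \<theta>)\<^sup>2) > 0" using gk_rad_pos[OF kabs] by simp
    show ?thesis unfolding gk_def by (rule frac_le) (use le pos in auto)
  qed
  have der: "((\<lambda>\<theta>. - ln (c + (pi/2 - \<theta>))) has_real_derivative 1 / (c + (pi/2 - \<theta>))) (at \<theta> within {0..pi/2})"
    if "\<theta> \<in> {0..pi/2}" for \<theta>
    using that c0 by (auto intro!: derivative_eq_intros simp: field_simps)
  have "((\<lambda>\<theta>. 1 / (c + (pi/2 - \<theta>))) has_integral (- ln (c + (pi/2 - pi/2)) - - ln (c + (pi/2 - 0)))) {0..pi/2}"
    by (rule fundamental_theorem_of_calculus) (auto simp: has_real_derivative_iff_has_vector_derivative[symmetric] intro: der)
  then have I: "((\<lambda>\<theta>. 1 / (c + (pi/2 - \<theta>))) has_integral (ln (c + pi/2) - ln c)) {0..pi/2}" by simp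
  have "ln (c + pi/2) - ln c \<le> ellK k"
    unfolding ellK_gk
    by (rule has_integral_le[OF I integrable_integral[OF integrable_continuous_interval[OF cont_gk[OF kabs]]]])
       (use low in auto)
  moreover have "ln (c + pi/2) - ln c > M"
  proof -
    have cp: "c + pi/2 > 0" using c0 pi_gt_zero by linarith
    have "ln (c + pi/2) - ln c = ln ((c + pi/2) / c)" using cp c0 by (simp add: ln_div)
    moreover have "(c + pi/2) / c > exp M"
    proof -
      have "c * (2 * exp M) \<le> pi" using c2 by (simp add: field_simps)
      then have "c * exp M < c + pi/2" using c0 by (simp add: field_simps)
      then show ?thesis using c0 by (simp add: field_simps)
    qed
    then have "ln ((c + pi/2) / c) > ln (exp M)" using c0 by (subst ln_less_cancel_iff) (auto intro: less_trans[OF exp_gt_zero])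
    ultimately show ?thesis by simp
  qed
  ultimately show ?thesis using k0 k1 by auto
qed


lemma s_rad_pos: "k^4 - k\<^sup>2 + 1 > (0::real)"
proof -
  have "k^4 - k\<^sup>2 + 1 = (k\<^sup>2 - 1/2)\<^sup>2 + 3/4" by (simp add: power2_eq_square power4_eq_xxxx algebra_simps)
  also have "\<dots> > 0" by (simp add: add_nonneg_pos)
  finally show ?thesis .
qed

lemma s_pos: "s_par k > 0" unfolding s_par_def using s_rad_pos by simp

lemma s_sq: "(s_par k)\<^sup>2 = k^4 - k\<^sup>2 + 1"
  unfolding s_par_def using s_rad_pos[of k] by simp

lemma s_ge_half: "s_par k \<ge> 1/2"
proof -
  have "k^4 - k\<^sup>2 + 1 = (k\<^sup>2 - 1/2)\<^sup>2 + 3/4" by (simp add: power2_eq_square power4_eq_xxxx algebra_simps)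
  then have "(1/2)\<^sup>2 \<le> (s_par k)\<^sup>2" using s_sq[of k] by (simp add: power2_eq_square)
  then show ?thesis using s_pos[of k] by (simp add: power2_le_iff_abs_le)
qed

lemma s_le1: "\<bar>k\<bar> < 1 \<Longrightarrow> s_par k \<le> 1"
proof -
  assume k: "\<bar>k\<bar> < 1"
  have "k\<^sup>2 < 1" using k by (metis abs_square_less_1)
  have e4: "k^4 = k\<^sup>2 * k\<^sup>2" by (simp add: power4_eq_xxxx power2_eq_square)
  have "k\<^sup>2 * k\<^sup>2 \<le> k\<^sup>2 * 1" using \<open>k\<^sup>2 < 1\<close> by (intro mult_left_mono) auto
  then have "k^4 - k\<^sup>2 + 1 \<le> 1" unfolding e4 by simp
  then show ?thesis unfolding s_par_def by simp
qed

lemma s_deriv: "(s_par has_real_derivative (4 * k^3 - 2 * k) / (2 * s_par k)) (at k)"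
  unfolding s_par_def using s_rad_pos[of k]
  by (auto intro!: derivative_eq_intros simp: field_simps)

lemma Cn_s: "Cn_on n S s_par"
proof -
  have "Cn_on n UNIV (\<lambda>k::real. sqrt (k^4 - k\<^sup>2 + 1))"
    by (rule Cn_on_sqrt[OF open_UNIV Cn_on_add[OF Cn_on_diff[OF Cn_on_power[OF Cn_on_id] Cn_on_power[OF Cn_on_id]] Cn_on_const]])
       (rule s_rad_pos)
  then show ?thesis unfolding s_par_def[abs_def] by (rule Cn_on_subset) simp
qed

lemma q_range:
  assumes "0 < k" "k < 1"
  shows "q_par k \<in> {-2<..<-1}"
proof -
  have k2: "0 < k\<^sup>2" "k\<^sup>2 < 1" using assms by (auto simp: power_less_one_iff)
  have s1: "s_par k < 1"
  proof -
    have e4: "k^4 = k\<^sup>2 * k\<^sup>2" by (simp add: power4_eq_xxxx power2_eq_square)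
    have "k\<^sup>2 * k\<^sup>2 < k\<^sup>2 * 1" using k2 by (intro mult_strict_left_mono) auto
    then have "k^4 - k\<^sup>2 + 1 < 1" unfolding e4 by simp
    then show ?thesis unfolding s_par_def by simp
  qed
  have s2: "s_par k > k\<^sup>2"
  proof -
    have "(k\<^sup>2)\<^sup>2 < k^4 - k\<^sup>2 + 1" using k2 by (simp add: power4_eq_xxxx power2_eq_square)
    then have "sqrt ((k\<^sup>2)\<^sup>2) < s_par k" unfolding s_par_def by (rule real_sqrt_less_mono)
    moreover have "sqrt ((k\<^sup>2)\<^sup>2) = k\<^sup>2" using real_sqrt_abs[of "k\<^sup>2"] by simp
    ultimately show ?thesis by linarith
  qed
  show ?thesis unfolding q_par_def greaterThanLessThan_iff using s1 s2 k2 by (intro conjI; linarith)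
qed

lemma omega_eq:
  assumes k: "\<bar>k\<bar> < 1"
  shows "omega_par L k = 16 * (ellK k)\<^sup>2 * s_par k / L\<^sup>2"
proof -
  have k2: "k\<^sup>2 < 1" using k by (metis abs_square_less_1)
  define s where "s = s_par k"
  have sp: "s > 0" unfolding s_def by (rule s_pos)
  have ss: "s\<^sup>2 = k^4 - k\<^sup>2 + 1" unfolding s_def by (rule s_sq)
  define q where "q = k\<^sup>2 - 1 - s"
  have nz: "q \<noteq> 0" unfolding q_def using k2 sp by simp
  have e: "(1 - k\<^sup>2) * s + k^4 - k\<^sup>2 + 1 = - s * q"
    unfolding q_def using ss by (simp add: algebra_simps power2_eq_square)
  show ?thesis unfolding omega_par_def s_def[symmetric] e q_def[symmetric] using nz
    by (cases "L = 0") (simp_all add: field_simps)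
qed

lemma aX_eq:
  "(k\<^sup>2 - 1 - s_par k) * (- k\<^sup>2 - 1 - s_par k) = 2 + 2 * s_par k - k\<^sup>2"
  using s_sq[of k] by (simp add: algebra_simps power2_eq_square power4_eq_xxxx)

lemma incr_MVT:
  fixes f f' :: "real \<Rightarrow> real"
  assumes d: "\<And>x. -1 < x \<Longrightarrow> x < 1 \<Longrightarrow> DERIV f x :> f' x"
    and p: "\<And>x. 0 < x \<Longrightarrow> x < 1 \<Longrightarrow> f' x > 0"
    and ab: "0 \<le> a" "a < b" "b < 1"
  shows "f a < f b"
proof -
  have "DERIV f x :> f' x" if "a \<le> x" "x \<le> b" for x using d ab that by auto
  from MVT2[OF ab(2) this] obtain z where z: "a < z" "z < b" "f b - f a = (b - a) * f' z" by blast
  have "f' z > 0" using p z ab by auto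
  then have "(b - a) * f' z > 0" using ab by simp
  then show ?thesis using z by simp
qed

definition Om :: "real \<Rightarrow> real \<Rightarrow> real" where
  "Om L k = 16 * (ellK k)\<^sup>2 * s_par k / L\<^sup>2"

definition Gf :: "real \<Rightarrow> real" where
  "Gf k = (ellK k)\<^sup>2 * (2 + 2 * s_par k - k\<^sup>2)"

lemma Om_deriv:
  assumes k: "\<bar>k\<bar> < 1"
  shows "DERIV (Om L) k :> 16 * (2 * ellK k * Kd k * s_par k + (ellK k)\<^sup>2 * ((4 * k^3 - 2 * k) / (2 * s_par k))) / L\<^sup>2"
proof (cases "L = 0")
  case True then show ?thesis unfolding Om_def[abs_def] by simp
next
  case False then show ?thesis unfolding Om_def[abs_def]
    by (auto intro!: derivative_eq_intros ellK_deriv[OF k] s_deriv simp: field_simps power2_eq_square)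
qed

lemma Gf_deriv:
  assumes k: "\<bar>k\<bar> < 1"
  shows "DERIV Gf k :> 2 * ellK k * Kd k * (2 + 2 * s_par k - k\<^sup>2) + (ellK k)\<^sup>2 * (2 * ((4 * k^3 - 2 * k) / (2 * s_par k)) - 2 * k)"
  unfolding Gf_def[abs_def]
  by (auto intro!: derivative_eq_intros ellK_deriv[OF k] s_deriv simp: field_simps power2_eq_square)

lemma Om_deriv_pos:
  assumes k: "0 < k" "k < 1" and L: "L \<noteq> 0"
  shows "16 * (2 * ellK k * Kd k * s_par k + (ellK k)\<^sup>2 * ((4 * k^3 - 2 * k) / (2 * s_par k))) / L\<^sup>2 > 0"
proof -
  define K where "K = ellK k"
  define s where "s = s_par k"
  have K: "K > 0" unfolding K_def using ellK_pos k by simp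
  have s: "s > 0" unfolding s_def by (rule s_pos)
  have ss: "s\<^sup>2 = k^4 - k\<^sup>2 + 1" unfolding s_def by (rule s_sq)
  have kd: "Kd k \<ge> k * K / 2" unfolding K_def using Kd_ge k by simp
  have h1: "2 * K * Kd k * s \<ge> 2 * K * (k * K / 2) * s"
    using kd K s by (intro mult_right_mono mult_left_mono) auto
  have h2a: "2 * K * (k * K / 2) * s + K\<^sup>2 * ((4 * k^3 - 2 * k) / (2 * s)) = K\<^sup>2 * k * (s\<^sup>2 + 2 * k\<^sup>2 - 1) / s"
    using s by (simp add: field_simps power2_eq_square power3_eq_cube)
  have h2: "2 * K * (k * K / 2) * s + K\<^sup>2 * ((4 * k^3 - 2 * k) / (2 * s)) = K\<^sup>2 * k * (k^4 + k\<^sup>2) / s"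
    unfolding h2a ss by simp
  have k4: "k^4 + k\<^sup>2 > 0" using k by (simp add: add_nonneg_pos)
  have h3: "K\<^sup>2 * k * (k^4 + k\<^sup>2) / s > 0" using K s k k4 by (intro divide_pos_pos mult_pos_pos) auto
  have "2 * K * Kd k * s + K\<^sup>2 * ((4 * k^3 - 2 * k) / (2 * s)) > 0" using h1 h2 h3 by linarith
  then show ?thesis unfolding K_def[symmetric] s_def[symmetric] using L by simp
qed

lemma Gf_deriv_pos:
  assumes k: "0 < k" "k < 1"
  shows "2 * ellK k * Kd k * (2 + 2 * s_par k - k\<^sup>2) + (ellK k)\<^sup>2 * (2 * ((4 * k^3 - 2 * k) / (2 * s_par k)) - 2 * k) > 0"
proof -
  define K where "K = ellK k"
  define s where "s = s_par k"
  have K: "K > 0" unfolding K_def using ellK_pos k by simp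
  have s: "s > 0" unfolding s_def by (rule s_pos)
  have s1: "s \<le> 1" unfolding s_def using s_le1 k by simp
  have ss: "s\<^sup>2 = k^4 - k\<^sup>2 + 1" unfolding s_def by (rule s_sq)
  have k2: "k\<^sup>2 < 1" using k by (simp add: power_less_one_iff)
  have kd: "Kd k \<ge> k * K / 2" unfolding K_def using Kd_ge k by simp
  have m: "2 + 2 * s - k\<^sup>2 > 0" using s k2 by linarith
  have h1: "2 * K * Kd k * (2 + 2 * s - k\<^sup>2) \<ge> 2 * K * (k * K / 2) * (2 + 2 * s - k\<^sup>2)"
    using kd K m by (intro mult_right_mono mult_left_mono) auto
  have h2a: "2 * K * (k * K / 2) * (2 + 2 * s - k\<^sup>2) + K\<^sup>2 * (2 * ((4 * k^3 - 2 * k) / (2 * s)) - 2 * k)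
      = K\<^sup>2 * k * (2 * s\<^sup>2 - k\<^sup>2 * s + 4 * k\<^sup>2 - 2) / s"
    using s by (simp add: field_simps power2_eq_square power3_eq_cube)
  have h2b: "2 * s\<^sup>2 - k\<^sup>2 * s + 4 * k\<^sup>2 - 2 = k\<^sup>2 * (2 * k\<^sup>2 + 2 - s)"
    unfolding ss by (simp add: algebra_simps power2_eq_square power4_eq_xxxx)
  have h2: "2 * K * (k * K / 2) * (2 + 2 * s - k\<^sup>2) + K\<^sup>2 * (2 * ((4 * k^3 - 2 * k) / (2 * s)) - 2 * k)
      = K\<^sup>2 * k^3 * (2 * k\<^sup>2 + 2 - s) / s"
    unfolding h2a h2b by (simp add: power2_eq_square power3_eq_cube)
  have kk: "2 * k\<^sup>2 + 2 - s > 0" using s1 zero_le_power2[of k] by linarith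
  have h3: "K\<^sup>2 * k^3 * (2 * k\<^sup>2 + 2 - s) / s > 0" using K s k kk by (intro divide_pos_pos mult_pos_pos) auto
  have "2 * K * Kd k * (2 + 2 * s - k\<^sup>2) + K\<^sup>2 * (2 * ((4 * k^3 - 2 * k) / (2 * s)) - 2 * k) > 0"
    using h1 h2 h3 by linarith
  then show ?thesis unfolding K_def[symmetric] s_def[symmetric] by simp
qed

lemma Om_mono: "L \<noteq> 0 \<Longrightarrow> 0 \<le> a \<Longrightarrow> a < b \<Longrightarrow> b < 1 \<Longrightarrow> Om L a < Om L b"
  by (rule incr_MVT[OF Om_deriv Om_deriv_pos]) auto

lemma Gf_mono: "0 \<le> a \<Longrightarrow> a < b \<Longrightarrow> b < 1 \<Longrightarrow> Gf a < Gf b"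
  by (rule incr_MVT[OF Gf_deriv Gf_deriv_pos]) auto

lemma s_0: "s_par 0 = 1" by (simp add: s_par_def)

lemma Om_0: "Om L 0 = 4 * pi\<^sup>2 / L\<^sup>2"
  by (simp add: Om_def ellK_0 s_0 power2_eq_square)

lemma Gf_0: "Gf 0 = pi\<^sup>2"
  by (simp add: Gf_def ellK_0 s_0 power2_eq_square)


lemma root4_sqrt: "root 4 x = sqrt (sqrt x)"
proof -
  have "root (2*2) x = root 2 (root 2 x)" by (rule real_root_mult_exp)
  then show ?thesis by (simp add: sqrt_def)
qed

lemma aX_Gf: "(ellK k)\<^sup>2 * (k\<^sup>2 - 1 - s_par k) * (- k\<^sup>2 - 1 - s_par k) * L\<^sup>2 = Gf k * L\<^sup>2"
proof -
  have e: "(k\<^sup>2 - 1 - s_par k) * (- k\<^sup>2 - 1 - s_par k) = 2 + 2 * s_par k - k\<^sup>2" by (rule aX_eq)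
  show ?thesis unfolding Gf_def using e by (metis mult.assoc)
qed

lemma a_eq: "a_par L k = 2 * root 4 (Gf k * L\<^sup>2) / L"
  unfolding a_par_def aX_Gf ..

lemma Gf_gt: "0 < k \<Longrightarrow> k < 1 \<Longrightarrow> Gf k > pi\<^sup>2"
  using Gf_mono[of 0 k] Gf_0 by simp

lemma a_range:
  assumes L: "L > 0" and k: "0 < k" "k < 1"
  shows "a_par L k > 2 * sqrt pi / sqrt L"
proof -
  have "Gf k * L\<^sup>2 > pi\<^sup>2 * L\<^sup>2" using Gf_gt[OF k] L by simp
  then have "root 4 (Gf k * L\<^sup>2) > root 4 (pi\<^sup>2 * L\<^sup>2)" by (simp add: real_root_less_iff)
  moreover have "root 4 (pi\<^sup>2 * L\<^sup>2) = sqrt pi * sqrt L"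
  proof -
    have "sqrt (pi\<^sup>2 * L\<^sup>2) = pi * L" using L by (simp add: real_sqrt_mult)
    then show ?thesis unfolding root4_sqrt using L by (simp add: real_sqrt_mult)
  qed
  ultimately have "a_par L k > 2 * (sqrt pi * sqrt L) / L" unfolding a_eq using L
    by (simp add: divide_strict_right_mono)
  moreover have "2 * (sqrt pi * sqrt L) / L = 2 * sqrt pi / sqrt L"
    using L by (simp add: field_simps)
  ultimately show ?thesis by simp
qed

lemma Cn_ellK01: "Cn_on n {0<..<1} ellK"
  by (rule Cn_on_subset[OF Cn_ellK]) auto

lemma Cn_q: "Cn_on n S q_par"
  unfolding q_par_def[abs_def]
  by (intro Cn_on_diff Cn_on_power Cn_on_id Cn_on_const Cn_s)

lemma Cn_b: "Cn_on n {0<..<1} (b_par L)"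
proof -
  have eq: "b_par L = (\<lambda>k. (4 / L) * ellK k)" by (simp add: b_par_def fun_eq_iff)
  show ?thesis unfolding eq by (rule Cn_on_mult[OF Cn_on_const Cn_ellK01])
qed

lemma Cn_Om: "Cn_on n {-1<..<1} (Om L)"
proof -
  have eq: "Om L = (\<lambda>k. (16 / L\<^sup>2) * ((ellK k)\<^sup>2 * s_par k))" by (simp add: Om_def fun_eq_iff)
  show ?thesis unfolding eq by (rule Cn_on_mult[OF Cn_on_const Cn_on_mult[OF Cn_on_power[OF Cn_ellK] Cn_s]])
qed

lemma Cn_omega: "Cn_on n {0<..<1} (omega_par L)"
  by (rule Cn_on_cong[OF _ _ Cn_on_subset[OF Cn_Om]]) (auto simp: omega_eq Om_def)

lemma Cn_Gf: "Cn_on n {-1<..<1} Gf"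
  unfolding Gf_def[abs_def]
  by (intro Cn_on_mult Cn_on_power Cn_ellK Cn_on_diff Cn_on_add Cn_on_const Cn_s Cn_on_id)

lemma Cn_a:
  assumes L: "L > 0"
  shows "Cn_on n {0<..<1} (a_par L)"
proof -
  have pos: "Gf k * L\<^sup>2 > 0" if "k \<in> {0<..<1}" for k
  proof -
    have "Gf k > pi\<^sup>2" using Gf_gt[of k] that by simp
    moreover have "pi\<^sup>2 > 0" by simp
    ultimately have "Gf k > 0" by linarith
    then show ?thesis using L by simp
  qed
  have X: "Cn_on n {0<..<1} (\<lambda>k. Gf k * L\<^sup>2)"
    by (rule Cn_on_mult[OF Cn_on_subset[OF Cn_Gf] Cn_on_const]) auto
  have s1: "Cn_on n {0<..<1} (\<lambda>k. sqrt (Gf k * L\<^sup>2))" by (rule Cn_on_sqrt[OF _ X pos]) auto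
  have s2: "Cn_on n {0<..<1} (\<lambda>k. sqrt (sqrt (Gf k * L\<^sup>2)))" by (rule Cn_on_sqrt[OF _ s1]) (use pos in auto)
  have "Cn_on n {0<..<1} (\<lambda>k. 2 * sqrt (sqrt (Gf k * L\<^sup>2)) / L)"
    by (rule Cn_on_divide[OF _ Cn_on_mult[OF Cn_on_const s2] Cn_on_const]) (use L in auto)
  then show ?thesis unfolding a_eq[abs_def] root4_sqrt .
qed

lemma omega_Om: "0 < k \<Longrightarrow> k < 1 \<Longrightarrow> omega_par L k = Om L k"
  using omega_eq[of k L] by (simp add: Om_def)

lemma omega_strict_mono: "L > 0 \<Longrightarrow> strict_mono_on {0<..<1} (omega_par L)"
  unfolding strict_mono_on_def using Om_mono omega_Om by auto

lemma omega_gt: "L > 0 \<Longrightarrow> 0 < k \<Longrightarrow> k < 1 \<Longrightarrow> omega_par L k > 4 * pi\<^sup>2 / L\<^sup>2"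
  using Om_mono[of L 0 k] Om_0[of L] omega_Om[of k L] by simp

lemma Om_cont: "\<bar>x\<bar> < 1 \<Longrightarrow> isCont (Om L) x"
  using Om_deriv DERIV_isCont by blast

lemma omega_surj:
  assumes L: "L > 0" and w: "w > 4 * pi\<^sup>2 / L\<^sup>2"
  shows "\<exists>k. 0 < k \<and> k < 1 \<and> omega_par L k = w"
proof -
  have w0: "w > 0" using w by (smt (verit) divide_nonneg_pos zero_le_power2 L zero_less_power)
  define M where "M = sqrt (w * L\<^sup>2 / 8)"
  obtain k2 where k2: "0 < k2" "k2 < 1" "ellK k2 > M" using ellK_big by blast
  have M0: "M \<ge> 0" unfolding M_def using w0 by simp
  have "M\<^sup>2 < (ellK k2)\<^sup>2" using k2 M0 by (intro power_strict_mono) auto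
  then have "w * L\<^sup>2 / 8 < (ellK k2)\<^sup>2" unfolding M_def using w0 by simp
  then have "w < 8 * (ellK k2)\<^sup>2 / L\<^sup>2" using L by (simp add: field_simps)
  also have "\<dots> \<le> 16 * (ellK k2)\<^sup>2 * s_par k2 / L\<^sup>2"
  proof -
    have "(ellK k2)\<^sup>2 * 1 \<le> (ellK k2)\<^sup>2 * (2 * s_par k2)"
      by (rule mult_left_mono) (use s_ge_half[of k2] in auto)
    then have "8 * (ellK k2)\<^sup>2 \<le> 16 * (ellK k2)\<^sup>2 * s_par k2" by (simp add: algebra_simps)
    then show ?thesis using L by (intro divide_right_mono) auto
  qed
  finally have big: "w < Om L k2" unfolding Om_def .
  have "\<exists>x. 0 \<le> x \<and> x \<le> k2 \<and> Om L x = w"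
    by (rule IVT) (use Om_0[of L] w big k2 Om_cont in auto)
  then obtain x where x: "0 \<le> x" "x \<le> k2" "Om L x = w" by blast
  have "x \<noteq> 0" using x Om_0[of L] w by auto
  then have "0 < x" using x by simp
  then show ?thesis using x k2 omega_Om by auto
qed

lemma omega_bij: "L > 0 \<Longrightarrow> bij_betw (omega_par L) {0<..<1} {4 * pi\<^sup>2 / L\<^sup>2 <..}"
  unfolding bij_betw_def
proof
  assume L: "L > 0"
  show "inj_on (omega_par L) {0<..<1}" by (rule strict_mono_on_imp_inj_on[OF omega_strict_mono[OF L]])
  show "omega_par L ` {0<..<1} = {4 * pi\<^sup>2 / L\<^sup>2<..}"
  proof
    show "omega_par L ` {0<..<1} \<subseteq> {4 * pi\<^sup>2 / L\<^sup>2<..}" using omega_gt[OF L] by auto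
    show "{4 * pi\<^sup>2 / L\<^sup>2<..} \<subseteq> omega_par L ` {0<..<1}"
    proof
      fix w assume "w \<in> {4 * pi\<^sup>2 / L\<^sup>2<..}"
      then obtain k where k: "0 < k" "k < 1" "omega_par L k = w" using omega_surj[OF L] by auto
      then show "w \<in> omega_par L ` {0<..<1}" by (intro image_eqI[of _ _ k]) auto
    qed
  qed
qed

lemma kw_prop:
  assumes L: "L > 0" and w: "w > 4 * pi\<^sup>2 / L\<^sup>2"
  shows "k_of_omega L w \<in> {0<..<1} \<and> omega_par L (k_of_omega L w) = w"
proof -
  have ex: "\<exists>!k. k \<in> {0<..<1} \<and> omega_par L k = w"
  proof -
    obtain k where k: "0 < k" "k < 1" "omega_par L k = w" using omega_surj[OF L w] by blast
    moreover have "k' = k" if "k' \<in> {0<..<1} \<and> omega_par L k' = w" for k'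
      using inj_onD[OF strict_mono_on_imp_inj_on[OF omega_strict_mono[OF L]], of k' k] that k by auto
    ultimately show ?thesis by auto
  qed
  show ?thesis unfolding k_of_omega_def by (rule theI'[OF ex])
qed

lemma kw_omega:
  assumes L: "L > 0" and k: "0 < k" "k < 1"
  shows "k_of_omega L (omega_par L k) = k"
proof -
  have w: "omega_par L k > 4 * pi\<^sup>2 / L\<^sup>2" using omega_gt[OF L k] .
  from kw_prop[OF L w] have "k_of_omega L (omega_par L k) \<in> {0<..<1}" "omega_par L (k_of_omega L (omega_par L k)) = omega_par L k" by auto
  then show ?thesis using inj_onD[OF strict_mono_on_imp_inj_on[OF omega_strict_mono[OF L]]] k by auto
qed

lemma smooth_real_deriv:
  fixes f :: "real \<Rightarrow> real"
  assumes "open S" "\<And>n. Cn_on n S f" "\<And>x. x \<in> S \<Longrightarrow> DERIV f x :> f' x"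
  shows "Cn_on n S f'"
proof -
  obtain D where D: "\<And>x. x \<in> S \<Longrightarrow> (f has_derivative D x) (at x)" "\<And>v n. Cn_on n S (\<lambda>x. D x v)"
    by (rule smooth_deriv[OF assms(1,2)]) blast
  have "D x 1 = f' x" if "x \<in> S" for x
  proof -
    have "D x = (*) (f' x)" using has_derivative_unique[OF D(1)[OF that] assms(3)[OF that, unfolded has_field_derivative_def]] .
    then show ?thesis by simp
  qed
  then show ?thesis using Cn_on_cong[OF assms(1) _ D(2)] by blast
qed

definition OD :: "real \<Rightarrow> real \<Rightarrow> real" where
  "OD L k = 16 * (2 * ellK k * Kd k * s_par k + (ellK k)\<^sup>2 * ((4 * k^3 - 2 * k) / (2 * s_par k))) / L\<^sup>2"

lemma Cn_OD: "Cn_on n {0<..<1} (OD L)"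
proof -
  have "Cn_on n {-1<..<1} (OD L)"
  proof (rule smooth_real_deriv[OF _ Cn_Om])
    fix x :: real assume "x \<in> {-1<..<1}"
    then show "DERIV (Om L) x :> OD L x" unfolding OD_def by (intro Om_deriv) auto
  qed auto
  then show ?thesis by (rule Cn_on_subset) auto
qed

lemma Cn_kw:
  assumes L: "L > 0"
  shows "Cn_on n {4 * pi\<^sup>2 / L\<^sup>2 <..} (k_of_omega L)"
proof -
  let ?W = "{4 * pi\<^sup>2 / L\<^sup>2 <..}"
  let ?kw = "k_of_omega L"
  have L0: "L \<noteq> 0" using L by simp
  have der: "(?kw has_derivative (\<lambda>v. v / OD L (?kw w))) (at w)" if w: "w \<in> ?W" for w
  proof -
    define x where "x = ?kw w"
    have x: "x \<in> {0<..<1}" "omega_par L x = w" unfolding x_def using kw_prop[OF L] w by auto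
    have cont: "continuous_on {0<..<1} (Om L)"
      by (rule continuous_at_imp_continuous_on) (auto intro: Om_cont)
    have inv: "?kw (Om L y) = y" if "y \<in> {0<..<1}" for y
      using kw_omega[OF L] omega_Om that by auto
    have odp: "OD L x > 0" unfolding OD_def using Om_deriv_pos[OF _ _ L0] x by auto
    have d: "(Om L has_derivative (*) (OD L x)) (at x)"
      using Om_deriv[of x L] x unfolding OD_def has_field_derivative_def by auto
    have "(?kw has_derivative (\<lambda>v. v / OD L x)) (at (Om L x))"
      by (rule has_derivative_inverse_strong[OF _ x(1) cont inv d]) (use odp in \<open>auto simp: fun_eq_iff\<close>)
    moreover have "Om L x = w" using x omega_Om by auto
    ultimately show ?thesis unfolding x_def by simp
  qed
  show ?thesis
  proof (induction n)
    case 0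
    have "continuous_on ?W ?kw"
      using der by (meson continuous_at_imp_continuous_on has_derivative_continuous)
    then show ?case by simp
  next
    case (Suc n)
    have c: "Cn_on n ?W (\<lambda>w. OD L (?kw w))"
      by (rule Cn_on_compose_real[OF _ Cn_OD Suc.IH]) (use kw_prop[OF L] in auto)
    show ?case
    proof (rule Cn_on_SucI[OF der])
      fix v :: real
      show "Cn_on n ?W (\<lambda>w. v / OD L (?kw w))"
      proof (rule Cn_on_divide[OF _ Cn_on_const c])
        fix w assume "w \<in> ?W"
        then have "?kw w \<in> {0<..<1}" using kw_prop[OF L] by auto
        then have "0 < OD L (?kw w)" unfolding OD_def by (intro Om_deriv_pos[OF _ _ L0]) auto
        then show "OD L (?kw w) \<noteq> 0" by simp
      qed auto
    qed assumption
  qed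
qed


definition V01 :: "(real \<times> real) set" where "V01 = {0<..<1} \<times> UNIV"

lemma open_V01: "open V01" unfolding V01_def by (intro open_Times) auto

lemma V01_iff: "z \<in> V01 \<longleftrightarrow> 0 < fst z \<and> fst z < 1" unfolding V01_def by (cases z) auto

lemma q_neg: "0 < k \<Longrightarrow> k < 1 \<Longrightarrow> q_par k < 0"
  using q_range[of k] by auto

lemma Cn_Phi:
  assumes L: "L > 0"
  shows "Cn_on n V01 (\<lambda>z. phi_k L (fst z) (snd z))"
proof -
  have f01: "fst z \<in> {0<..<1}" if "z \<in> V01" for z using that V01_iff by auto
  have bf: "Cn_on n V01 (\<lambda>z. b_par L (fst z))"
    by (rule Cn_on_compose_real[OF open_V01 Cn_b Cn_on_fst f01])
  have af: "Cn_on n V01 (\<lambda>z. a_par L (fst z))"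
    by (rule Cn_on_compose_real[OF open_V01 Cn_a[OF L] Cn_on_fst f01])
  have qf: "Cn_on n V01 (\<lambda>z. q_par (fst z))"
    by (rule Cn_on_compose_real[OF open_V01 Cn_q Cn_on_fst]) auto
  have m: "Cn_on n V01 (\<lambda>z. (b_par L (fst z) * snd z, fst z))"
    by (rule Cn_on_pair[OF Cn_on_mult[OF bf Cn_on_snd] Cn_on_fst])
  have J: "Cn_on n V01 (\<lambda>z. Jp (b_par L (fst z) * snd z, fst z))"
    by (rule Cn_on_compose[OF open_V01 Cn_Jp m]) (auto simp: U0_iff V01_iff)
  have R: "Cn_on n V01 (\<lambda>z. 1 - q_par (fst z) * (sin (Jp (b_par L (fst z) * snd z, fst z)))\<^sup>2)"
    by (rule Cn_on_diff[OF Cn_on_const Cn_on_mult[OF qf Cn_on_power[OF Cn_on_sin[OF open_V01 J]]]])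
  have Rpos: "1 - q_par (fst z) * (sin (Jp (b_par L (fst z) * snd z, fst z)))\<^sup>2 > 0" if "z \<in> V01" for z
  proof -
    have "q_par (fst z) < 0" using that V01_iff q_neg by auto
    then have "q_par (fst z) * (sin (Jp (b_par L (fst z) * snd z, fst z)))\<^sup>2 \<le> 0"
      by (simp add: mult_nonpos_nonneg)
    then show ?thesis by simp
  qed
  have "Cn_on n V01 (\<lambda>z. a_par L (fst z) * cos (Jp (b_par L (fst z) * snd z, fst z)) /
      sqrt (1 - q_par (fst z) * (sin (Jp (b_par L (fst z) * snd z, fst z)))\<^sup>2))"
  proof (rule Cn_on_divide[OF open_V01 Cn_on_mult[OF af Cn_on_cos[OF open_V01 J]] Cn_on_sqrt[OF open_V01 R Rpos]])
    fix z assume z: "z \<in> V01"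
    show "sqrt (1 - q_par (fst z) * (sin (Jp (b_par L (fst z) * snd z, fst z)))\<^sup>2) \<noteq> 0"
      using real_sqrt_gt_zero[OF Rpos[OF z]] by linarith
  qed
  then show ?thesis by (simp add: phi_k_def jcn_def jsn_def Jp_def)
qed

lemma phi_smooth_x:
  assumes L: "L > 0" and k: "0 < k" "k < 1"
  shows "smooth_on UNIV (phi_k L k)"
  unfolding smooth_on_def
proof
  fix n
  have "Cn_on n UNIV (\<lambda>x. phi_k L (fst (k, x)) (snd (k, x)))"
    by (rule Cn_on_compose[OF open_UNIV Cn_Phi[OF L] Cn_on_pair[OF Cn_on_const Cn_on_id]]) (use k in \<open>auto simp: V01_iff\<close>)
  then show "Cn_on n UNIV (phi_k L k)" by simp
qed

lemma phi_even:
  assumes k: "0 < k" "k < 1"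
  shows "phi_k L k (- x) = phi_k L k x"
proof -
  have ka: "\<bar>k\<bar> < 1" using k by simp
  have "jam (b_par L k * - x) k = - jam (b_par L k * x) k" using jam_odd[OF ka] by simp
  then show ?thesis by (simp add: phi_k_def jcn_def jsn_def)
qed

lemma phi_periodic:
  assumes L: "L > 0" and k: "0 < k" "k < 1"
  shows "phi_k L k (x + L) = phi_k L k x"
proof -
  have ka: "\<bar>k\<bar> < 1" using k by simp
  have "b_par L k * (x + L) = b_par L k * x + 4 * ellK k" using L by (simp add: b_par_def field_simps)
  then have "jam (b_par L k * (x + L)) k = jam (b_par L k * x) k + 2 * pi" using jam_shift4[OF ka] by simp
  then show ?thesis by (simp add: phi_k_def jcn_def jsn_def)
qed

lemma phi_omega_smooth:
  assumes L: "L > 0"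
  shows "smooth_on ({4 * pi\<^sup>2 / L\<^sup>2 <..} \<times> UNIV) (\<lambda>(w, x). phi_omega L w x)"
  unfolding smooth_on_def
proof
  fix n
  let ?W = "{4 * pi\<^sup>2 / L\<^sup>2 <..} \<times> (UNIV :: real set)"
  have o: "open ?W" by (intro open_Times) auto
  have kf: "Cn_on n ?W (\<lambda>p. k_of_omega L (fst p))"
    by (rule Cn_on_compose_real[OF o Cn_kw[OF L] Cn_on_fst]) auto
  have m: "Cn_on n ?W (\<lambda>p. (k_of_omega L (fst p), snd p))" by (rule Cn_on_pair[OF kf Cn_on_snd])
  have "Cn_on n ?W (\<lambda>p. phi_k L (fst (k_of_omega L (fst p), snd p)) (snd (k_of_omega L (fst p), snd p)))"
    by (rule Cn_on_compose[OF o Cn_Phi[OF L] m]) (use kw_prop[OF L] in \<open>auto simp: V01_iff\<close>)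
  moreover have "(\<lambda>(w, x). phi_omega L w x) = (\<lambda>p. phi_k L (k_of_omega L (fst p)) (snd p))"
    by (auto simp: phi_omega_def fun_eq_iff)
  ultimately show "Cn_on n ?W (\<lambda>(w, x). phi_omega L w x)" by simp
qed


lemma alg_p1:
  fixes a b q S C D sP :: real
  assumes "sP > 0" "sP\<^sup>2 = 1 - q * S\<^sup>2" "C\<^sup>2 = 1 - S\<^sup>2"
  shows "(a * (- S * (D * b)) * sP - a * C * (- (q * S * C * D * b) / sP)) / (sP * sP) = a * b * (q - 1) * S * D / sP^3"
proof -
  have "(a * (- S * (D * b)) * sP - a * C * (- (q * S * C * D * b) / sP)) / (sP * sP) = a * b * D * S * (q * C\<^sup>2 - sP\<^sup>2) / sP^3"
    using assms(1) by (simp add: field_simps power2_eq_square power3_eq_cube)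
  also have "q * C\<^sup>2 - sP\<^sup>2 = q - 1" unfolding assms(2,3) by (simp add: algebra_simps)
  finally show ?thesis by (simp add: algebra_simps)
qed

lemma alg_p2:
  fixes c b q k S C D sP :: real
  assumes "sP > 0" "sP\<^sup>2 = 1 - q * S\<^sup>2" "D\<^sup>2 = 1 - k\<^sup>2 * S\<^sup>2"
  shows "c * ((C * (D * b) * D + - (b * k\<^sup>2 * S * C) * S) * sP^3 - S * D * (of_nat 3 * ((- (q * S * C * D * b) / sP) * sP ^ (3 - Suc 0)))) / (sP^3 * sP^3)
    = c * b * C * (1 + (2 * q - 2 * k\<^sup>2) * S\<^sup>2 - q * k\<^sup>2 * S^4) / sP^5"
proof -
  have "c * ((C * (D * b) * D + - (b * k\<^sup>2 * S * C) * S) * sP^3 - S * D * (of_nat 3 * ((- (q * S * C * D * b) / sP) * sP ^ (3 - Suc 0)))) / (sP^3 * sP^3)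
     = c * b * C * ((D\<^sup>2 - k\<^sup>2 * S\<^sup>2) * sP\<^sup>2 + 3 * q * S\<^sup>2 * D\<^sup>2) / sP^5"
    using assms(1) by (simp add: field_simps power2_eq_square power3_eq_cube eval_nat_numeral)
  also have "(D\<^sup>2 - k\<^sup>2 * S\<^sup>2) * sP\<^sup>2 + 3 * q * S\<^sup>2 * D\<^sup>2 = 1 + (2 * q - 2 * k\<^sup>2) * S\<^sup>2 - q * k\<^sup>2 * S^4"
    unfolding assms(2,3) by (simp add: algebra_simps power2_eq_square power4_eq_xxxx)
  finally show ?thesis .
qed

lemma ode:
  assumes L: "L > 0" and k: "0 < k" "k < 1"
  shows "- deriv (deriv (phi_k L k)) x + omega_par L k * phi_k L k x - (phi_k L k x) ^ 5 = 0"
proof -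
  have ka: "\<bar>k\<bar> < 1" using k by simp
  define a where "a = a_par L k"
  define b where "b = b_par L k"
  define q where "q = q_par k"
  define w where "w = omega_par L k"
  define J where "J x = jam (b * x) k" for x
  define S where "S x = sin (J x)" for x
  define C where "C x = cos (J x)" for x
  define Dn where "Dn x = sqrt (1 - k\<^sup>2 * (S x)\<^sup>2)" for x
  define sP where "sP x = sqrt (1 - q * (S x)\<^sup>2)" for x
  have qn: "q < 0" unfolding q_def using q_neg k by simp
  have rP: "1 - q * (S x)\<^sup>2 > 0" for x
  proof -
    have "q * (S x)\<^sup>2 \<le> 0" by (rule mult_nonpos_nonneg) (use qn in auto)
    then show ?thesis by linarith
  qed
  have rD: "1 - k\<^sup>2 * (S x)\<^sup>2 > 0" for x unfolding S_def by (rule gk_rad_pos[OF ka])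
  have sP_pos: "sP x > 0" for x unfolding sP_def using rP by simp
  have Dn_pos: "Dn x > 0" for x unfolding Dn_def using rD by simp
  have sP2: "(sP x)\<^sup>2 = 1 - q * (S x)\<^sup>2" for x unfolding sP_def using rP[of x] by simp
  have Dn2: "(Dn x)\<^sup>2 = 1 - k\<^sup>2 * (S x)\<^sup>2" for x unfolding Dn_def using rD[of x] by simp
  have C2: "(C x)\<^sup>2 = 1 - (S x)\<^sup>2" for x unfolding C_def S_def by (simp add: cos_squared_eq)
  have phi_eq: "phi_k L k = (\<lambda>x. a * C x / sP x)"
    by (simp add: fun_eq_iff phi_k_def jcn_def jsn_def a_def b_def q_def C_def sP_def S_def J_def)
  have dJ: "DERIV J x :> Dn x * b" for x
  proof -
    have "DERIV (\<lambda>x. b * x) x :> b" by (auto intro!: derivative_eq_intros)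
    from DERIV_chain2[OF jam_deriv[OF ka] this] show ?thesis
      unfolding J_def Dn_def S_def by simp
  qed
  have dS: "DERIV S x :> C x * (Dn x * b)" for x
    unfolding S_def C_def by (rule DERIV_chain2[OF DERIV_sin dJ])
  have dC: "DERIV C x :> - S x * (Dn x * b)" for x
    unfolding S_def C_def using DERIV_chain2[OF DERIV_cos dJ] by simp
  have dDn: "DERIV Dn x :> - (b * k\<^sup>2 * S x * C x)" for x
  proof -
    have "DERIV (\<lambda>x. 1 - k\<^sup>2 * (S x)\<^sup>2) x :> - (k\<^sup>2 * (2 * S x * (C x * (Dn x * b))))"
      by (auto intro!: derivative_eq_intros dS simp: algebra_simps)
    from DERIV_chain2[OF DERIV_real_sqrt[OF rD[of x]] this]
    have h: "DERIV Dn x :> inverse (Dn x) / 2 * - (k\<^sup>2 * (2 * S x * (C x * (Dn x * b))))"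
      unfolding Dn_def by simp
    have e: "inverse (Dn x) / 2 * - (k\<^sup>2 * (2 * S x * (C x * (Dn x * b)))) = - (b * k\<^sup>2 * S x * C x)"
      using Dn_pos[of x] by (simp add: field_simps)
    show ?thesis using h unfolding e .
  qed
  have dP: "DERIV sP x :> - (q * S x * C x * Dn x * b) / sP x" for x
  proof -
    have "DERIV (\<lambda>x. 1 - q * (S x)\<^sup>2) x :> - (q * (2 * S x * (C x * (Dn x * b))))"
      by (auto intro!: derivative_eq_intros dS simp: algebra_simps)
    from DERIV_chain2[OF DERIV_real_sqrt[OF rP[of x]] this]
    have h: "DERIV sP x :> inverse (sP x) / 2 * - (q * (2 * S x * (C x * (Dn x * b))))"
      unfolding sP_def by simp
    have e: "inverse (sP x) / 2 * - (q * (2 * S x * (C x * (Dn x * b)))) = - (q * S x * C x * Dn x * b) / sP x"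
      using sP_pos[of x] by (simp add: field_simps)
    show ?thesis using h unfolding e .
  qed
  define p1 where "p1 x = a * b * (q - 1) * S x * Dn x / (sP x)^3" for x
  define Q where "Q x = 1 + (2 * q - 2 * k\<^sup>2) * (S x)\<^sup>2 - q * k\<^sup>2 * (S x)^4" for x
  define p2 where "p2 x = a * b * (q - 1) * b * C x * Q x / (sP x)^5" for x
  have d1: "DERIV (phi_k L k) x :> p1 x" for x
  proof -
    have h: "DERIV (\<lambda>x. a * C x / sP x) x :> (a * (- S x * (Dn x * b)) * sP x - a * C x * (- (q * S x * C x * Dn x * b) / sP x)) / (sP x * sP x)"
      by (rule DERIV_divide[OF DERIV_cmult[OF dC] dP]) (use sP_pos[of x] in simp)
    show ?thesis using h unfolding phi_eq p1_def
      alg_p1[where a=a and b=b and q=q and S="S x" and C="C x" and D="Dn x" and sP="sP x", OF sP_pos sP2 C2] .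
  qed
  have d2: "DERIV p1 x :> p2 x" for x
  proof -
    have dSD: "DERIV (\<lambda>x. S x * Dn x) x :> C x * (Dn x * b) * Dn x + - (b * k\<^sup>2 * S x * C x) * S x"
      by (rule DERIV_mult[OF dS dDn])
    have dP3: "DERIV (\<lambda>x. (sP x)^3) x :> of_nat 3 * ((- (q * S x * C x * Dn x * b) / sP x) * (sP x) ^ (3 - Suc 0))"
      by (rule DERIV_power[OF dP])
    have "DERIV (\<lambda>x. (a * b * (q - 1)) * ((S x * Dn x) / (sP x)^3)) x :>
      (a * b * (q - 1)) * (((C x * (Dn x * b) * Dn x + - (b * k\<^sup>2 * S x * C x) * S x) * (sP x)^3 - S x * Dn x * (of_nat 3 * ((- (q * S x * C x * Dn x * b) / sP x) * (sP x) ^ (3 - Suc 0)))) / ((sP x)^3 * (sP x)^3))"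
      by (rule DERIV_cmult[OF DERIV_divide[OF dSD dP3]]) (use sP_pos[of x] in simp)
    moreover have "(\<lambda>x. (a * b * (q - 1)) * ((S x * Dn x) / (sP x)^3)) = p1"
      by (simp add: fun_eq_iff p1_def)
    moreover have "(a * b * (q - 1)) * (((C x * (Dn x * b) * Dn x + - (b * k\<^sup>2 * S x * C x) * S x) * (sP x)^3 - S x * Dn x * (of_nat 3 * ((- (q * S x * C x * Dn x * b) / sP x) * (sP x) ^ (3 - Suc 0)))) / ((sP x)^3 * (sP x)^3))
       = p2 x"
      unfolding p2_def Q_def
      using alg_p2[where c="a * b * (q - 1)" and b=b and q=q and k=k and S="S x" and C="C x" and D="Dn x" and sP="sP x", OF sP_pos sP2 Dn2]
      by (simp add: mult.assoc)
    ultimately show ?thesis by simp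
  qed
  have dd1: "deriv (phi_k L k) = p1"
  proof
    fix y show "deriv (phi_k L k) y = p1 y" by (rule DERIV_imp_deriv[OF d1])
  qed
  have dd2: "deriv p1 x = p2 x" by (rule DERIV_imp_deriv[OF d2])
  define K where "K = ellK k"
  define s where "s = s_par k"
  have Kp: "K > 0" unfolding K_def using ellK_pos ka by simp
  have ss: "s\<^sup>2 = (k\<^sup>2)\<^sup>2 - k\<^sup>2 + 1" unfolding s_def using s_sq[of k] by (simp add: power2_eq_square power4_eq_xxxx)
  have qq: "q = k\<^sup>2 - 1 - s" unfolding q_def s_def q_par_def ..
  have bb: "b\<^sup>2 = 16 * K\<^sup>2 / L\<^sup>2" unfolding b_def b_par_def K_def by (simp add: power2_eq_square)
  have ww: "w = 16 * K\<^sup>2 * s / L\<^sup>2" unfolding w_def K_def s_def using omega_eq[OF ka] .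
  have a4: "a^4 = 16 * K\<^sup>2 * (2 + 2 * s - k\<^sup>2) / L\<^sup>2"
  proof -
    have G: "Gf k * L\<^sup>2 > 0" using Gf_gt[OF k] L pi_gt_zero
      by (metis mult_pos_pos zero_less_power2 less_trans not_less_iff_gr_or_eq pi_neq_zero power_zero_numeral)
    have "(root 4 (Gf k * L\<^sup>2))^4 = Gf k * L\<^sup>2" using G by (simp add: real_root_pow_pos2)
    then have "a^4 = 16 * (Gf k * L\<^sup>2) / L^4" unfolding a_def a_eq by (simp add: power_divide power_mult_distrib)
    also have "16 * (Gf k * L\<^sup>2) / L^4 = 16 * Gf k / L\<^sup>2"
      using L by (simp add: field_simps power2_eq_square power4_eq_xxxx)
    finally show ?thesis unfolding Gf_def K_def s_def by (simp add: mult.assoc)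
  qed
  have E: "-(q-1)*(1 + (2*q - 2*k\<^sup>2)*(S x)\<^sup>2 - q*k\<^sup>2*((S x)\<^sup>2)\<^sup>2) + s * (1-q*(S x)\<^sup>2)\<^sup>2 - (2 + 2 * s - k\<^sup>2)*(1-(S x)\<^sup>2)\<^sup>2 = 0"
    using qq ss by algebra
  define M where "M = 16 * K\<^sup>2 / L\<^sup>2"
  have bb': "b\<^sup>2 = M" unfolding M_def bb ..
  have ww': "w = M * s" unfolding M_def ww by simp
  have a4': "a^4 = M * (2 + 2 * s - k\<^sup>2)" unfolding M_def a4 by simp
  have main: "- b\<^sup>2 * (q - 1) * Q x + w * ((sP x)\<^sup>2)\<^sup>2 - a^4 * ((C x)\<^sup>2)\<^sup>2 = 0"
  proof -
    have "- b\<^sup>2 * (q - 1) * Q x + w * ((sP x)\<^sup>2)\<^sup>2 - a^4 * ((C x)\<^sup>2)\<^sup>2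
      = M * (-(q-1)*(1 + (2*q - 2*k\<^sup>2)*(S x)\<^sup>2 - q*k\<^sup>2*((S x)\<^sup>2)\<^sup>2) + s * (1-q*(S x)\<^sup>2)\<^sup>2 - (2 + 2 * s - k\<^sup>2)*(1-(S x)\<^sup>2)\<^sup>2)"
      unfolding bb' ww' a4' sP2 C2 Q_def by (simp add: algebra_simps power2_eq_square power4_eq_xxxx)
    then show ?thesis using E by simp
  qed
  have "- p2 x + w * (a * C x / sP x) - (a * C x / sP x)^5
      = a * C x / (sP x)^5 * (- b\<^sup>2 * (q - 1) * Q x + w * ((sP x)\<^sup>2)\<^sup>2 - a^4 * ((C x)\<^sup>2)\<^sup>2)"
    unfolding p2_def using sP_pos[of x] by (simp add: field_simps power2_eq_square power4_eq_xxxx eval_nat_numeral)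
  also have "\<dots> = 0" using main by simp
  finally have "- p2 x + w * (a * C x / sP x) - (a * C x / sP x)^5 = 0" .
  then show ?thesis unfolding dd1 dd2 w_def[symmetric] using phi_eq by simp
qed


theorem theorem3p2:
  fixes L :: real
  assumes L: "L > 0"
  shows
    "(\<forall>k\<in>{0<..<1}.
        smooth_on UNIV (phi_k L k)
      \<and> (\<forall>x. phi_k L k (- x) = phi_k L k x)
      \<and> (\<forall>x. phi_k L k (x + L) = phi_k L k x)
      \<and> (\<forall>x. - deriv (deriv (phi_k L k)) x + omega_par L k * phi_k L k x
               - (phi_k L k x) ^ 5 = 0))
   \<and> (\<forall>k\<in>{0<..<1}. a_par L k \<in> {2 * sqrt pi / sqrt L <..} \<and> q_par k \<in> {-2<..<-1})
   \<and> smooth_on {0<..<1} (a_par L) \<and> smooth_on {0<..<1} q_par \<and> smooth_on {0<..<1} (b_par L)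
   \<and> smooth_on {0<..<1} (omega_par L)
   \<and> strict_mono_on {0<..<1} (omega_par L)
   \<and> bij_betw (omega_par L) {0<..<1} {4 * pi\<^sup>2 / L\<^sup>2 <..}
   \<and> smooth_on ({4 * pi\<^sup>2 / L\<^sup>2 <..} \<times> UNIV) (\<lambda>(w, x). phi_omega L w x)"
proof (intro conjI ballI allI)
  fix k :: real assume "k \<in> {0<..<1}"
  then have k: "0 < k" "k < 1" by auto
  show "smooth_on UNIV (phi_k L k)" by (rule phi_smooth_x[OF L k])
  show "phi_k L k (- x) = phi_k L k x" for x by (rule phi_even[OF k])
  show "phi_k L k (x + L) = phi_k L k x" for x by (rule phi_periodic[OF L k])
  show "- deriv (deriv (phi_k L k)) x + omega_par L k * phi_k L k x - (phi_k L k x) ^ 5 = 0" for x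
    by (rule ode[OF L k])
next
  fix k :: real assume "k \<in> {0<..<1}"
  then have k: "0 < k" "k < 1" by auto
  show "a_par L k \<in> {2 * sqrt pi / sqrt L <..}" using a_range[OF L k] by simp
  show "q_par k \<in> {-2<..<-1}" by (rule q_range[OF k])
next
  show "smooth_on {0<..<1} (a_par L)" unfolding smooth_on_def using Cn_a[OF L] by blast
  show "smooth_on {0<..<1} q_par" unfolding smooth_on_def using Cn_q by blast
  show "smooth_on {0<..<1} (b_par L)" unfolding smooth_on_def using Cn_b by blast
  show "smooth_on {0<..<1} (omega_par L)" unfolding smooth_on_def using Cn_omega by blast
  show "strict_mono_on {0<..<1} (omega_par L)" by (rule omega_strict_mono[OF L])
  show "bij_betw (omega_par L) {0<..<1} {4 * pi\<^sup>2 / L\<^sup>2 <..}" by (rule omega_bij[OF L])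
  show "smooth_on ({4 * pi\<^sup>2 / L\<^sup>2 <..} \<times> UNIV) (\<lambda>(w, x). phi_omega L w x)"
    by (rule phi_omega_smooth[OF L])
qed


end
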